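(* Let $n\ge 2$. Each inverse subsemigroup of $(S_n,\cdot,{}^{-1})$ generated by fewer than $n$ elements lies in the variety of inverse semigroups (algebras of type $(2,1)$) generated by the $6$-element Brandt monoid $(B_2^1,\cdot,{}^{-1})$.
   Context: For $n\ge2$, $(S_n,\cdot,{}^{-1})$ is the inverse semigroup of partial one-to-one transformations of $\{0,1,\dots,3n+2\}$ (acting on the right, composition $x(\alpha\beta)=(x\alpha)\beta$, ${}^{-1}$ the inverse partial map) generated by the $n+1$ partial maps $\chi:\ n\mapsto 2n+1,\ n+1\mapsto 2n+2$ (undefined elsewhere) and, for $i=1,\dots,n$, $\chi_i:\ i-1\mapsto i,\ n+1+i\mapsto n+i,\ 2n+1+i\mapsto 2n+2+i$ (undefined elsewhere). The $6$-element Brandt monoid is $B_2^1$, where $B_2=\langle c,d\mid cdc=c,\ dcd=d,\ c^2=d^2=0\rangle=\{c,d,cd,dc,0\}$ and $1$ is an adjoined identity; it is an inverse semigroup, $s^{-1}$ denoting the unique inverse of $s$ (so $c^{-1}=d$, $d^{-1}=c$, and $1,cd,dc,0$ are self-inverse). *)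

theory Defs
  imports Main
begin

type_synonym pmap = "nat \<rightharpoonup> nat"

text \<open>Product acting on the right: x(a b) = (x a) b.\<close>
definition pmul :: "pmap \<Rightarrow> pmap \<Rightarrow> pmap" where
  "pmul a b = b \<circ>\<^sub>m a"

definition pinv :: "pmap \<Rightarrow> pmap" where
  "pinv a = (\<lambda>y. if \<exists>x. a x = Some y then Some (THE x. a x = Some y) else None)"

definition chi :: "nat \<Rightarrow> pmap" where
  "chi n = [n \<mapsto> 2*n+1, n+1 \<mapsto> 2*n+2]"

definition chi_i :: "nat \<Rightarrow> nat \<Rightarrow> pmap" where
  "chi_i n i = [i-1 \<mapsto> i, n+1+i \<mapsto> n+i, 2*n+1+i \<mapsto> 2*n+2+i]"

inductive_set inv_closure :: "pmap set \<Rightarrow> pmap set" for X where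
  gen: "a \<in> X \<Longrightarrow> a \<in> inv_closure X"
| mul: "a \<in> inv_closure X \<Longrightarrow> b \<in> inv_closure X \<Longrightarrow> pmul a b \<in> inv_closure X"
| inv: "a \<in> inv_closure X \<Longrightarrow> pinv a \<in> inv_closure X"

definition S :: "nat \<Rightarrow> pmap set" where
  "S n = inv_closure ({chi n} \<union> {chi_i n i | i. 1 \<le> i \<and> i \<le> n})"

datatype B21 = One | C | D | CD | DC | Zero

fun bmul :: "B21 \<Rightarrow> B21 \<Rightarrow> B21" where
  "bmul One y = y"
| "bmul x One = x"
| "bmul Zero _ = Zero"
| "bmul _ Zero = Zero"
| "bmul C C = Zero" | "bmul C D = CD" | "bmul C CD = Zero" | "bmul C DC = C"
| "bmul D C = DC" | "bmul D D = Zero" | "bmul D CD = D" | "bmul D DC = Zero"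
| "bmul CD C = C" | "bmul CD D = Zero" | "bmul CD CD = CD" | "bmul CD DC = Zero"
| "bmul DC C = Zero" | "bmul DC D = D" | "bmul DC CD = Zero" | "bmul DC DC = DC"

fun binv :: "B21 \<Rightarrow> B21" where
  "binv C = D" | "binv D = C" | "binv x = x"

datatype trm = Var nat | Mul trm trm | Inv trm

fun eval :: "('a \<Rightarrow> 'a \<Rightarrow> 'a) \<Rightarrow> ('a \<Rightarrow> 'a) \<Rightarrow> (nat \<Rightarrow> 'a) \<Rightarrow> trm \<Rightarrow> 'a" where
  "eval m i \<sigma> (Var k) = \<sigma> k"
| "eval m i \<sigma> (Mul s t) = m (eval m i \<sigma> s) (eval m i \<sigma> t)"
| "eval m i \<sigma> (Inv s) = i (eval m i \<sigma> s)"

definition satisfies :: "'a set \<Rightarrow> ('a \<Rightarrow> 'a \<Rightarrow> 'a) \<Rightarrow> ('a \<Rightarrow> 'a) \<Rightarrow> trm \<Rightarrow> trm \<Rightarrow> bool" where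
  "satisfies A m i s t \<longleftrightarrow> (\<forall>\<sigma>. (\<forall>k. \<sigma> k \<in> A) \<longrightarrow> eval m i \<sigma> s = eval m i \<sigma> t)"

text \<open>Membership in the variety generated by (B_2^1, bmul, binv) (Birkhoff: all identities of B_2^1 hold).\<close>
definition in_var_B21 :: "'a set \<Rightarrow> ('a \<Rightarrow> 'a \<Rightarrow> 'a) \<Rightarrow> ('a \<Rightarrow> 'a) \<Rightarrow> bool" where
  "in_var_B21 A m i \<longleftrightarrow>
     (\<forall>s t. satisfies (UNIV :: B21 set) bmul binv s t \<longrightarrow> satisfies A m i s t)"

end

theory Submission
  imports Defs
begin

definition inj_map :: "pmap \<Rightarrow> bool" where
  "inj_map z \<longleftrightarrow> (\<forall>x y v. z x = Some v \<longrightarrow> z y = Some v \<longrightarrow> x = y)"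

lemma pinv_iff: "inj_map a \<Longrightarrow> pinv a y = Some x \<longleftrightarrow> a x = Some y"
proof -
  assume ia: "inj_map a"
  show ?thesis
  proof
    assume h: "pinv a y = Some x"
    then have ex: "\<exists>x. a x = Some y" by (auto simp: pinv_def split: if_splits)
    then obtain x0 where x0: "a x0 = Some y" by blast
    have "(THE x. a x = Some y) = x0"
      using x0 ia by (auto simp: inj_map_def intro!: the_equality)
    then show "a x = Some y" using h ex x0 by (auto simp: pinv_def)
  next
    assume h: "a x = Some y"
    have "(THE x. a x = Some y) = x"
      using h ia by (auto simp: inj_map_def intro!: the_equality)
    then show "pinv a y = Some x" using h by (auto simp: pinv_def)
  qed
qed

lemma pinv_None: "pinv a y = None \<longleftrightarrow> (\<forall>x. a x \<noteq> Some y)"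
  by (auto simp: pinv_def)

lemma inj_pinv: "inj_map a \<Longrightarrow> inj_map (pinv a)"
proof -
  assume ia: "inj_map a"
  show ?thesis unfolding inj_map_def
  proof (intro allI impI)
    fix x y v assume "pinv a x = Some v" "pinv a y = Some v"
    then show "x = y" using pinv_iff[OF ia] by auto
  qed
qed

lemma inj_pmul: "inj_map a \<Longrightarrow> inj_map b \<Longrightarrow> inj_map (pmul a b)"
  unfolding inj_map_def pmul_def map_comp_def
  by (auto split: option.splits)

lemma pinv_pinv: "inj_map a \<Longrightarrow> pinv (pinv a) = a"
proof (rule ext)
  fix x assume ia: "inj_map a"
  have ip: "inj_map (pinv a)" using inj_pinv[OF ia] .
  show "pinv (pinv a) x = a x"
  proof (cases "a x")
    case None
    then show ?thesis using pinv_None[of "pinv a" x] pinv_iff[OF ia] by auto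
  next
    case (Some y)
    then show ?thesis using pinv_iff[OF ip] pinv_iff[OF ia] by auto
  qed
qed

lemma pinv_pmul: "inj_map a \<Longrightarrow> inj_map b \<Longrightarrow> pinv (pmul a b) = pmul (pinv b) (pinv a)"
proof (rule ext)
  fix y assume ia: "inj_map a" and ib: "inj_map b"
  have iab: "inj_map (pmul a b)" using inj_pmul[OF ia ib] .
  show "pinv (pmul a b) y = pmul (pinv b) (pinv a) y"
  proof (cases "pinv (pmul a b) y")
    case None
    then have "\<forall>x. pmul a b x \<noteq> Some y" using pinv_None by auto
    have "pmul (pinv b) (pinv a) y = None"
    proof (cases "pinv b y")
      case (Some z)
      have "pinv a z = None"
      proof (rule ccontr)
        assume "pinv a z \<noteq> None"
        then obtain w where "pinv a z = Some w" by auto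
        then have "a w = Some z" using pinv_iff[OF ia] by auto
        moreover have "b z = Some y" using Some pinv_iff[OF ib] by auto
        ultimately have "pmul a b w = Some y" by (simp add: pmul_def map_comp_def)
        then show False using \<open>\<forall>x. pmul a b x \<noteq> Some y\<close> by auto
      qed
      then show ?thesis using Some by (simp add: pmul_def map_comp_def)
    qed (simp add: pmul_def map_comp_def)
    then show ?thesis using None by simp
  next
    case (Some x)
    then have "pmul a b x = Some y" using pinv_iff[OF iab] by auto
    then obtain z where z: "a x = Some z" "b z = Some y"
      by (auto simp: pmul_def map_comp_def split: option.splits)
    then have "pinv b y = Some z" "pinv a z = Some x" using pinv_iff[OF ia] pinv_iff[OF ib] by auto
    then show ?thesis using Some by (simp add: pmul_def map_comp_def)
  qed
qed

lemma pinv_eqI: "(\<And>x y. a x = Some y \<longleftrightarrow> g y = Some x) \<Longrightarrow> pinv a = g"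
proof (rule ext)
  fix y assume h: "\<And>x y. a x = Some y \<longleftrightarrow> g y = Some x"
  have ia: "inj_map a" unfolding inj_map_def using h by (metis option.inject)
  show "pinv a y = g y"
  proof (cases "g y")
    case None then show ?thesis using h pinv_None by (metis not_None_eq)
  next
    case (Some x) then show ?thesis using h pinv_iff[OF ia] by auto
  qed
qed

definition R1 :: "pmap \<Rightarrow> bool" where
  "R1 z \<longleftrightarrow> (\<forall>x y. z x \<noteq> None \<longrightarrow> z y \<noteq> None \<longrightarrow> x = y)"

definition bnd :: "nat \<Rightarrow> pmap \<Rightarrow> bool" where
  "bnd n z \<longleftrightarrow> (\<forall>x y. z x = Some y \<longrightarrow> x \<le> 3*n+2 \<and> y \<le> 3*n+2)"

definition acm :: "nat \<Rightarrow> nat \<Rightarrow> nat \<Rightarrow> pmap" where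
  "acm n a b = [a \<mapsto> b, 2*n+2+a \<mapsto> 2*n+2+b]"
definition chiI :: "nat \<Rightarrow> nat \<Rightarrow> pmap" where
  "chiI n i = [i \<mapsto> i-1, n+i \<mapsto> n+1+i, 2*n+2+i \<mapsto> 2*n+1+i]"
definition Em :: "nat \<Rightarrow> nat \<Rightarrow> pmap" where
  "Em n i = [i-1 \<mapsto> i-1, n+1+i \<mapsto> n+1+i, 2*n+1+i \<mapsto> 2*n+1+i]"
definition Ep :: "nat \<Rightarrow> nat \<Rightarrow> pmap" where
  "Ep n i = [i \<mapsto> i, n+i \<mapsto> n+i, 2*n+2+i \<mapsto> 2*n+2+i]"
definition chiX :: "nat \<Rightarrow> pmap" where
  "chiX n = [2*n+1 \<mapsto> n, 2*n+2 \<mapsto> n+1]"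
definition Ea :: "nat \<Rightarrow> pmap" where
  "Ea n = [n \<mapsto> n, n+1 \<mapsto> n+1]"
definition Eb :: "nat \<Rightarrow> pmap" where
  "Eb n = [2*n+1 \<mapsto> 2*n+1, 2*n+2 \<mapsto> 2*n+2]"

definition big :: "nat \<Rightarrow> pmap \<Rightarrow> bool" where
  "big n z \<longleftrightarrow> (\<exists>a b. a \<le> n \<and> b \<le> n \<and> z = acm n a b)
     \<or> (\<exists>i. 1 \<le> i \<and> i \<le> n \<and> (z = chi_i n i \<or> z = chiI n i \<or> z = Em n i \<or> z = Ep n i))
     \<or> z = chi n \<or> z = chiX n \<or> z = Ea n \<or> z = Eb n"

definition inW :: "nat \<Rightarrow> pmap \<Rightarrow> bool" where
  "inW n z \<longleftrightarrow> (R1 z \<and> bnd n z) \<or> big n z"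

lemmas shp = acm_def chi_i_def chiI_def Em_def Ep_def chi_def chiX_def Ea_def Eb_def

lemma R1_pmul: "R1 a \<Longrightarrow> R1 (pmul a b)"
  by (auto simp: R1_def pmul_def map_comp_def split: option.splits)

lemma bnd_pmul: "bnd n a \<Longrightarrow> bnd n b \<Longrightarrow> bnd n (pmul a b)"
  by (auto simp: bnd_def pmul_def map_comp_def split: option.splits)

lemma bnd_big: "big n z \<Longrightarrow> bnd n z"
  by (auto simp: big_def bnd_def shp split: if_splits)

lemma bnd_inW: "inW n z \<Longrightarrow> bnd n z"
  using bnd_big inW_def by auto

lemma inj_big: "big n z \<Longrightarrow> inj_map z"
  by (auto simp: big_def inj_map_def shp split: if_splits)

lemma inj_R1: "R1 z \<Longrightarrow> inj_map z"
  by (auto simp: R1_def inj_map_def)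

lemma inj_inW: "inW n z \<Longrightarrow> inj_map z"
  using inj_big inj_R1 inW_def by auto

lemma inW_R1I: "R1 z \<Longrightarrow> bnd n z \<Longrightarrow> inW n z"
  by (simp add: inW_def)


lemma inW_acm: "a \<le> n \<Longrightarrow> b \<le> n \<Longrightarrow> inW n (acm n a b)"
  unfolding inW_def big_def by blast
lemma inW_chi_i: "1 \<le> i \<Longrightarrow> i \<le> n \<Longrightarrow> inW n (chi_i n i)"
  unfolding inW_def big_def by blast
lemma inW_chiI: "1 \<le> i \<Longrightarrow> i \<le> n \<Longrightarrow> inW n (chiI n i)"
  unfolding inW_def big_def by blast
lemma inW_Em: "1 \<le> i \<Longrightarrow> i \<le> n \<Longrightarrow> inW n (Em n i)"
  unfolding inW_def big_def by blast
lemma inW_Ep: "1 \<le> i \<Longrightarrow> i \<le> n \<Longrightarrow> inW n (Ep n i)"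
  unfolding inW_def big_def by blast
lemma inW_chi: "inW n (chi n)" unfolding inW_def big_def by blast
lemma inW_chiX: "inW n (chiX n)" unfolding inW_def big_def by blast
lemma inW_Ea: "inW n (Ea n)" unfolding inW_def big_def by blast
lemma inW_Eb: "inW n (Eb n)" unfolding inW_def big_def by blast
lemmas inW_shapes = inW_acm inW_chi_i inW_chiI inW_Em inW_Ep inW_chi inW_chiX inW_Ea inW_Eb

lemma big_shapes:
  "a \<le> n \<Longrightarrow> b \<le> n \<Longrightarrow> big n (acm n a b)"
  "1 \<le> i \<Longrightarrow> i \<le> n \<Longrightarrow> big n (chi_i n i)"
  "1 \<le> i \<Longrightarrow> i \<le> n \<Longrightarrow> big n (chiI n i)"
  "1 \<le> i \<Longrightarrow> i \<le> n \<Longrightarrow> big n (Em n i)"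
  "1 \<le> i \<Longrightarrow> i \<le> n \<Longrightarrow> big n (Ep n i)"
  "big n (chi n)" "big n (chiX n)" "big n (Ea n)" "big n (Eb n)"
  unfolding big_def by blast+

lemma inW_R1_big: "big n Y \<Longrightarrow> big n g \<Longrightarrow> R1 (pmul Y g) \<Longrightarrow> inW n (pmul Y g)"
  by (intro inW_R1I bnd_pmul bnd_big)

lemma m_ac_gch:
  assumes "2 \<le> n" and "a \<le> n" and "b \<le> n" and "1 \<le> j" and "j \<le> n"
  shows "inW n (pmul (acm n a b) (chi_i n j))"
proof (cases "b = j - 1")
  case True
  have "pmul (acm n a b) (chi_i n j) = acm n a j" using assms True by (auto simp: fun_eq_iff pmul_def map_comp_def shp)
  then show ?thesis using assms True by (simp add: inW_shapes)
next
  case False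
  have "R1 (pmul (acm n a b) (chi_i n j))" using assms False by (auto simp: R1_def pmul_def map_comp_def shp split: if_splits)
    then show ?thesis using assms by (intro inW_R1_big) (auto simp: big_shapes)
qed

lemma m_ac_gcI:
  assumes "2 \<le> n" and "a \<le> n" and "b \<le> n" and "1 \<le> j" and "j \<le> n"
  shows "inW n (pmul (acm n a b) (chiI n j))"
proof (cases "b = j")
  case True
  have "pmul (acm n a b) (chiI n j) = acm n a (j - 1)" using assms True by (auto simp: fun_eq_iff pmul_def map_comp_def shp)
  then show ?thesis using assms True by (simp add: inW_shapes)
next
  case False
  have "R1 (pmul (acm n a b) (chiI n j))" using assms False by (auto simp: R1_def pmul_def map_comp_def shp split: if_splits)
    then show ?thesis using assms by (intro inW_R1_big) (auto simp: big_shapes)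
qed

lemma m_ac_gX:
  assumes "2 \<le> n" and "a \<le> n" and "b \<le> n"
  shows "inW n (pmul (acm n a b) (chi n))"
proof -
  have "R1 (pmul (acm n a b) (chi n))" using assms  by (auto simp: R1_def pmul_def map_comp_def shp split: if_splits)
    then show ?thesis using assms by (intro inW_R1_big) (auto simp: big_shapes)
qed

lemma m_ac_gXI:
  assumes "2 \<le> n" and "a \<le> n" and "b \<le> n"
  shows "inW n (pmul (acm n a b) (chiX n))"
proof -
  have "R1 (pmul (acm n a b) (chiX n))" using assms  by (auto simp: R1_def pmul_def map_comp_def shp split: if_splits)
    then show ?thesis using assms by (intro inW_R1_big) (auto simp: big_shapes)
qed

lemma m_ch_gch:
  assumes "2 \<le> n" and "1 \<le> i" and "i \<le> n" and "1 \<le> j" and "j \<le> n"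
  shows "inW n (pmul (chi_i n i) (chi_i n j))"
proof (cases "j = i + 1")
  case True
  have "pmul (chi_i n i) (chi_i n j) = acm n (i - 1) (i + 1)" using assms True by (auto simp: fun_eq_iff pmul_def map_comp_def shp)
  then show ?thesis using assms True by (simp add: inW_shapes)
next
  case False
  have "R1 (pmul (chi_i n i) (chi_i n j))" using assms False by (auto simp: R1_def pmul_def map_comp_def shp split: if_splits)
    then show ?thesis using assms by (intro inW_R1_big) (auto simp: big_shapes)
qed

lemma m_ch_gcI:
  assumes "2 \<le> n" and "1 \<le> i" and "i \<le> n" and "1 \<le> j" and "j \<le> n"
  shows "inW n (pmul (chi_i n i) (chiI n j))"
proof (cases "j = i")
  case True
  have "pmul (chi_i n i) (chiI n j) = Em n i" using assms True by (auto simp: fun_eq_iff pmul_def map_comp_def shp)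
  then show ?thesis using assms True by (simp add: inW_shapes)
next
  case False
  have "R1 (pmul (chi_i n i) (chiI n j))" using assms False by (auto simp: R1_def pmul_def map_comp_def shp split: if_splits)
    then show ?thesis using assms by (intro inW_R1_big) (auto simp: big_shapes)
qed

lemma m_ch_gX:
  assumes "2 \<le> n" and "1 \<le> i" and "i \<le> n"
  shows "inW n (pmul (chi_i n i) (chi n))"
proof -
  have "R1 (pmul (chi_i n i) (chi n))" using assms  by (auto simp: R1_def pmul_def map_comp_def shp split: if_splits)
    then show ?thesis using assms by (intro inW_R1_big) (auto simp: big_shapes)
qed

lemma m_ch_gXI:
  assumes "2 \<le> n" and "1 \<le> i" and "i \<le> n"
  shows "inW n (pmul (chi_i n i) (chiX n))"
proof -
  have "R1 (pmul (chi_i n i) (chiX n))" using assms  by (auto simp: R1_def pmul_def map_comp_def shp split: if_splits)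
    then show ?thesis using assms by (intro inW_R1_big) (auto simp: big_shapes)
qed

lemma m_cI_gch:
  assumes "2 \<le> n" and "1 \<le> i" and "i \<le> n" and "1 \<le> j" and "j \<le> n"
  shows "inW n (pmul (chiI n i) (chi_i n j))"
proof (cases "j = i")
  case True
  have "pmul (chiI n i) (chi_i n j) = Ep n i" using assms True by (auto simp: fun_eq_iff pmul_def map_comp_def shp)
  then show ?thesis using assms True by (simp add: inW_shapes)
next
  case False
  have "R1 (pmul (chiI n i) (chi_i n j))" using assms False by (auto simp: R1_def pmul_def map_comp_def shp split: if_splits)
    then show ?thesis using assms by (intro inW_R1_big) (auto simp: big_shapes)
qed

lemma m_cI_gcI:
  assumes "2 \<le> n" and "1 \<le> i" and "i \<le> n" and "1 \<le> j" and "j \<le> n"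
  shows "inW n (pmul (chiI n i) (chiI n j))"
proof (cases "j + 1 = i")
  case True
  have "pmul (chiI n i) (chiI n j) = acm n i (i - 2)" using assms True by (auto simp: fun_eq_iff pmul_def map_comp_def shp)
  then show ?thesis using assms True by (simp add: inW_shapes)
next
  case False
  have "R1 (pmul (chiI n i) (chiI n j))" using assms False by (auto simp: R1_def pmul_def map_comp_def shp split: if_splits)
    then show ?thesis using assms by (intro inW_R1_big) (auto simp: big_shapes)
qed

lemma m_cI_gX:
  assumes "2 \<le> n" and "1 \<le> i" and "i \<le> n"
  shows "inW n (pmul (chiI n i) (chi n))"
proof -
  have "R1 (pmul (chiI n i) (chi n))" using assms  by (auto simp: R1_def pmul_def map_comp_def shp split: if_splits)
    then show ?thesis using assms by (intro inW_R1_big) (auto simp: big_shapes)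
qed

lemma m_cI_gXI:
  assumes "2 \<le> n" and "1 \<le> i" and "i \<le> n"
  shows "inW n (pmul (chiI n i) (chiX n))"
proof -
  have "R1 (pmul (chiI n i) (chiX n))" using assms  by (auto simp: R1_def pmul_def map_comp_def shp split: if_splits)
    then show ?thesis using assms by (intro inW_R1_big) (auto simp: big_shapes)
qed

lemma m_Em_gch:
  assumes "2 \<le> n" and "1 \<le> i" and "i \<le> n" and "1 \<le> j" and "j \<le> n"
  shows "inW n (pmul (Em n i) (chi_i n j))"
proof (cases "j = i")
  case True
  have "pmul (Em n i) (chi_i n j) = chi_i n i" using assms True by (auto simp: fun_eq_iff pmul_def map_comp_def shp)
  then show ?thesis using assms True by (simp add: inW_shapes)
next
  case False
  have "R1 (pmul (Em n i) (chi_i n j))" using assms False by (auto simp: R1_def pmul_def map_comp_def shp split: if_splits)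
    then show ?thesis using assms by (intro inW_R1_big) (auto simp: big_shapes)
qed

lemma m_Em_gcI:
  assumes "2 \<le> n" and "1 \<le> i" and "i \<le> n" and "1 \<le> j" and "j \<le> n"
  shows "inW n (pmul (Em n i) (chiI n j))"
proof (cases "j + 1 = i")
  case True
  have "pmul (Em n i) (chiI n j) = acm n (i - 1) (i - 2)" using assms True by (auto simp: fun_eq_iff pmul_def map_comp_def shp)
  then show ?thesis using assms True by (simp add: inW_shapes)
next
  case False
  have "R1 (pmul (Em n i) (chiI n j))" using assms False by (auto simp: R1_def pmul_def map_comp_def shp split: if_splits)
    then show ?thesis using assms by (intro inW_R1_big) (auto simp: big_shapes)
qed

lemma m_Em_gX:
  assumes "2 \<le> n" and "1 \<le> i" and "i \<le> n"
  shows "inW n (pmul (Em n i) (chi n))"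
proof -
  have "R1 (pmul (Em n i) (chi n))" using assms  by (auto simp: R1_def pmul_def map_comp_def shp split: if_splits)
    then show ?thesis using assms by (intro inW_R1_big) (auto simp: big_shapes)
qed

lemma m_Em_gXI:
  assumes "2 \<le> n" and "1 \<le> i" and "i \<le> n"
  shows "inW n (pmul (Em n i) (chiX n))"
proof -
  have "R1 (pmul (Em n i) (chiX n))" using assms  by (auto simp: R1_def pmul_def map_comp_def shp split: if_splits)
    then show ?thesis using assms by (intro inW_R1_big) (auto simp: big_shapes)
qed

lemma m_Ep_gch:
  assumes "2 \<le> n" and "1 \<le> i" and "i \<le> n" and "1 \<le> j" and "j \<le> n"
  shows "inW n (pmul (Ep n i) (chi_i n j))"
proof (cases "j = i + 1")
  case True
  have "pmul (Ep n i) (chi_i n j) = acm n i (i + 1)" using assms True by (auto simp: fun_eq_iff pmul_def map_comp_def shp)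
  then show ?thesis using assms True by (simp add: inW_shapes)
next
  case False
  have "R1 (pmul (Ep n i) (chi_i n j))" using assms False by (auto simp: R1_def pmul_def map_comp_def shp split: if_splits)
    then show ?thesis using assms by (intro inW_R1_big) (auto simp: big_shapes)
qed

lemma m_Ep_gcI:
  assumes "2 \<le> n" and "1 \<le> i" and "i \<le> n" and "1 \<le> j" and "j \<le> n"
  shows "inW n (pmul (Ep n i) (chiI n j))"
proof (cases "j = i")
  case True
  have "pmul (Ep n i) (chiI n j) = chiI n i" using assms True by (auto simp: fun_eq_iff pmul_def map_comp_def shp)
  then show ?thesis using assms True by (simp add: inW_shapes)
next
  case False
  have "R1 (pmul (Ep n i) (chiI n j))" using assms False by (auto simp: R1_def pmul_def map_comp_def shp split: if_splits)
    then show ?thesis using assms by (intro inW_R1_big) (auto simp: big_shapes)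
qed

lemma m_Ep_gX:
  assumes "2 \<le> n" and "1 \<le> i" and "i \<le> n"
  shows "inW n (pmul (Ep n i) (chi n))"
proof -
  have "R1 (pmul (Ep n i) (chi n))" using assms  by (auto simp: R1_def pmul_def map_comp_def shp split: if_splits)
    then show ?thesis using assms by (intro inW_R1_big) (auto simp: big_shapes)
qed

lemma m_Ep_gXI:
  assumes "2 \<le> n" and "1 \<le> i" and "i \<le> n"
  shows "inW n (pmul (Ep n i) (chiX n))"
proof -
  have "R1 (pmul (Ep n i) (chiX n))" using assms  by (auto simp: R1_def pmul_def map_comp_def shp split: if_splits)
    then show ?thesis using assms by (intro inW_R1_big) (auto simp: big_shapes)
qed

lemma m_X_gch:
  assumes "2 \<le> n" and "1 \<le> j" and "j \<le> n"
  shows "inW n (pmul (chi n) (chi_i n j))"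
proof -
  have "R1 (pmul (chi n) (chi_i n j))" using assms  by (auto simp: R1_def pmul_def map_comp_def shp split: if_splits)
    then show ?thesis using assms by (intro inW_R1_big) (auto simp: big_shapes)
qed

lemma m_X_gcI:
  assumes "2 \<le> n" and "1 \<le> j" and "j \<le> n"
  shows "inW n (pmul (chi n) (chiI n j))"
proof -
  have "R1 (pmul (chi n) (chiI n j))" using assms  by (auto simp: R1_def pmul_def map_comp_def shp split: if_splits)
    then show ?thesis using assms by (intro inW_R1_big) (auto simp: big_shapes)
qed

lemma m_X_gX:
  assumes "2 \<le> n"
  shows "inW n (pmul (chi n) (chi n))"
proof -
  have "R1 (pmul (chi n) (chi n))" using assms  by (auto simp: R1_def pmul_def map_comp_def shp split: if_splits)
    then show ?thesis using assms by (intro inW_R1_big) (auto simp: big_shapes)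
qed

lemma m_X_gXI:
  assumes "2 \<le> n"
  shows "inW n (pmul (chi n) (chiX n))"
proof -
  have "pmul (chi n) (chiX n) = Ea n" using assms by (auto simp: fun_eq_iff pmul_def map_comp_def shp)
  then show ?thesis using assms by (simp add: inW_shapes)
qed

lemma m_XI_gch:
  assumes "2 \<le> n" and "1 \<le> j" and "j \<le> n"
  shows "inW n (pmul (chiX n) (chi_i n j))"
proof -
  have "R1 (pmul (chiX n) (chi_i n j))" using assms  by (auto simp: R1_def pmul_def map_comp_def shp split: if_splits)
    then show ?thesis using assms by (intro inW_R1_big) (auto simp: big_shapes)
qed

lemma m_XI_gcI:
  assumes "2 \<le> n" and "1 \<le> j" and "j \<le> n"
  shows "inW n (pmul (chiX n) (chiI n j))"
proof -
  have "R1 (pmul (chiX n) (chiI n j))" using assms  by (auto simp: R1_def pmul_def map_comp_def shp split: if_splits)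
    then show ?thesis using assms by (intro inW_R1_big) (auto simp: big_shapes)
qed

lemma m_XI_gX:
  assumes "2 \<le> n"
  shows "inW n (pmul (chiX n) (chi n))"
proof -
  have "pmul (chiX n) (chi n) = Eb n" using assms by (auto simp: fun_eq_iff pmul_def map_comp_def shp)
  then show ?thesis using assms by (simp add: inW_shapes)
qed

lemma m_XI_gXI:
  assumes "2 \<le> n"
  shows "inW n (pmul (chiX n) (chiX n))"
proof -
  have "R1 (pmul (chiX n) (chiX n))" using assms  by (auto simp: R1_def pmul_def map_comp_def shp split: if_splits)
    then show ?thesis using assms by (intro inW_R1_big) (auto simp: big_shapes)
qed

lemma m_Ea_gch:
  assumes "2 \<le> n" and "1 \<le> j" and "j \<le> n"
  shows "inW n (pmul (Ea n) (chi_i n j))"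
proof -
  have "R1 (pmul (Ea n) (chi_i n j))" using assms  by (auto simp: R1_def pmul_def map_comp_def shp split: if_splits)
    then show ?thesis using assms by (intro inW_R1_big) (auto simp: big_shapes)
qed

lemma m_Ea_gcI:
  assumes "2 \<le> n" and "1 \<le> j" and "j \<le> n"
  shows "inW n (pmul (Ea n) (chiI n j))"
proof -
  have "R1 (pmul (Ea n) (chiI n j))" using assms  by (auto simp: R1_def pmul_def map_comp_def shp split: if_splits)
    then show ?thesis using assms by (intro inW_R1_big) (auto simp: big_shapes)
qed

lemma m_Ea_gX:
  assumes "2 \<le> n"
  shows "inW n (pmul (Ea n) (chi n))"
proof -
  have "pmul (Ea n) (chi n) = chi n" using assms by (auto simp: fun_eq_iff pmul_def map_comp_def shp)
  then show ?thesis using assms by (simp add: inW_shapes)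
qed

lemma m_Ea_gXI:
  assumes "2 \<le> n"
  shows "inW n (pmul (Ea n) (chiX n))"
proof -
  have "R1 (pmul (Ea n) (chiX n))" using assms  by (auto simp: R1_def pmul_def map_comp_def shp split: if_splits)
    then show ?thesis using assms by (intro inW_R1_big) (auto simp: big_shapes)
qed

lemma m_Eb_gch:
  assumes "2 \<le> n" and "1 \<le> j" and "j \<le> n"
  shows "inW n (pmul (Eb n) (chi_i n j))"
proof -
  have "R1 (pmul (Eb n) (chi_i n j))" using assms  by (auto simp: R1_def pmul_def map_comp_def shp split: if_splits)
    then show ?thesis using assms by (intro inW_R1_big) (auto simp: big_shapes)
qed

lemma m_Eb_gcI:
  assumes "2 \<le> n" and "1 \<le> j" and "j \<le> n"
  shows "inW n (pmul (Eb n) (chiI n j))"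
proof -
  have "R1 (pmul (Eb n) (chiI n j))" using assms  by (auto simp: R1_def pmul_def map_comp_def shp split: if_splits)
    then show ?thesis using assms by (intro inW_R1_big) (auto simp: big_shapes)
qed

lemma m_Eb_gX:
  assumes "2 \<le> n"
  shows "inW n (pmul (Eb n) (chi n))"
proof -
  have "R1 (pmul (Eb n) (chi n))" using assms  by (auto simp: R1_def pmul_def map_comp_def shp split: if_splits)
    then show ?thesis using assms by (intro inW_R1_big) (auto simp: big_shapes)
qed

lemma m_Eb_gXI:
  assumes "2 \<le> n"
  shows "inW n (pmul (Eb n) (chiX n))"
proof -
  have "pmul (Eb n) (chiX n) = chiX n" using assms by (auto simp: fun_eq_iff pmul_def map_comp_def shp)
  then show ?thesis using assms by (simp add: inW_shapes)
qed

lemmas mults = m_ac_gch m_ac_gcI m_ac_gX m_ac_gXI m_ch_gch m_ch_gcI m_ch_gX m_ch_gXI m_cI_gch m_cI_gcI m_cI_gX m_cI_gXI m_Em_gch m_Em_gcI m_Em_gX m_Em_gXI m_Ep_gch m_Ep_gcI m_Ep_gX m_Ep_gXI m_X_gch m_X_gcI m_X_gX m_X_gXI m_XI_gch m_XI_gcI m_XI_gX m_XI_gXI m_Ea_gch m_Ea_gcI m_Ea_gX m_Ea_gXI m_Eb_gch m_Eb_gcI m_Eb_gX m_Eb_gXI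


lemma R1_pinv: "R1 z \<Longrightarrow> R1 (pinv z)"
proof -
  assume r: "R1 z"
  show ?thesis unfolding R1_def
  proof (intro allI impI)
    fix x y assume "pinv z x \<noteq> None" "pinv z y \<noteq> None"
    then obtain u v where "z u = Some x" "z v = Some y" by (auto simp: pinv_def split: if_splits)
    moreover then have "u = v" using r unfolding R1_def by auto
    ultimately show "x = y" by simp
  qed
qed

lemma bnd_pinv: "bnd n z \<Longrightarrow> inj_map z \<Longrightarrow> bnd n (pinv z)"
  unfolding bnd_def using pinv_iff by blast

lemma pinv_acm: "1 \<le> n \<Longrightarrow> a \<le> n \<Longrightarrow> b \<le> n \<Longrightarrow> pinv (acm n a b) = acm n b a"
  by (rule pinv_eqI) (auto simp: acm_def)
lemma pinv_chi_i: "1 \<le> n \<Longrightarrow> 1 \<le> i \<Longrightarrow> pinv (chi_i n i) = chiI n i"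
  by (rule pinv_eqI) (auto simp: chi_i_def chiI_def)
lemma pinv_chiI: "1 \<le> n \<Longrightarrow> 1 \<le> i \<Longrightarrow> pinv (chiI n i) = chi_i n i"
  by (rule pinv_eqI) (auto simp: chi_i_def chiI_def)
lemma pinv_Em: "1 \<le> n \<Longrightarrow> 1 \<le> i \<Longrightarrow> pinv (Em n i) = Em n i"
  by (rule pinv_eqI) (auto simp: Em_def)
lemma pinv_Ep: "1 \<le> n \<Longrightarrow> 1 \<le> i \<Longrightarrow> pinv (Ep n i) = Ep n i"
  by (rule pinv_eqI) (auto simp: Ep_def)
lemma pinv_chi: "1 \<le> n \<Longrightarrow> pinv (chi n) = chiX n"
  by (rule pinv_eqI) (auto simp: chi_def chiX_def)
lemma pinv_chiX: "1 \<le> n \<Longrightarrow> pinv (chiX n) = chi n"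
  by (rule pinv_eqI) (auto simp: chi_def chiX_def)
lemma pinv_Ea: "1 \<le> n \<Longrightarrow> pinv (Ea n) = Ea n"
  by (rule pinv_eqI) (auto simp: Ea_def)
lemma pinv_Eb: "1 \<le> n \<Longrightarrow> pinv (Eb n) = Eb n"
  by (rule pinv_eqI) (auto simp: Eb_def)

lemma inW_pinv: "1 \<le> n \<Longrightarrow> inW n z \<Longrightarrow> inW n (pinv z)"
  unfolding inW_def big_def
  apply (elim disjE exE conjE)
  using R1_pinv bnd_pinv inj_R1 apply blast
  by (auto simp: pinv_acm pinv_chi_i pinv_chiI pinv_Em pinv_Ep pinv_chi pinv_chiX pinv_Ea pinv_Eb
       inW_shapes[unfolded inW_def big_def])

lemma inW_mul_gen:
  assumes n: "2 \<le> n" and w: "inW n w"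
    and g: "(\<exists>j. 1 \<le> j \<and> j \<le> n \<and> (g = chi_i n j \<or> g = chiI n j)) \<or> g = chi n \<or> g = chiX n"
  shows "inW n (pmul w g)"
proof -
  have bg: "big n g" using g by (auto simp: big_shapes)
  show ?thesis
  proof (cases "R1 w \<and> bnd n w")
    case True
    then show ?thesis using R1_pmul bnd_pmul bnd_big[OF bg] inW_R1I by blast
  next
    case False
    then have "big n w" using w inW_def by auto
    then show ?thesis unfolding big_def using g n
      by (elim disjE exE conjE) (simp_all add: mults)
  qed
qed

lemma pmul_assoc: "pmul (pmul a b) c = pmul a (pmul b c)"
  by (auto simp: pmul_def map_comp_def fun_eq_iff split: option.splits)

lemma gen_pinv: assumes n: "1 \<le> n" shows "(\<exists>j. 1 \<le> j \<and> j \<le> n \<and> (g = chi_i n j \<or> g = chiI n j)) \<or> g = chi n \<or> g = chiX n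
  \<Longrightarrow> (\<exists>j. 1 \<le> j \<and> j \<le> n \<and> (pinv g = chi_i n j \<or> pinv g = chiI n j)) \<or> pinv g = chi n \<or> pinv g = chiX n"
  using n by (auto simp: pinv_chi_i pinv_chiI pinv_chi pinv_chiX)

lemma S_inW_aux:
  assumes n: "2 \<le> n" and a: "a \<in> S n"
  shows "inW n a \<and> (\<forall>w. inW n w \<longrightarrow> inW n (pmul w a) \<and> inW n (pmul a w))"
  using a unfolding S_def
proof -
  have n1: "1 \<le> n" using n by simp
  show ?thesis using a unfolding S_def
proof (induction rule: inv_closure.induct)
  case (gen g)
  then have g: "(\<exists>j. 1 \<le> j \<and> j \<le> n \<and> (g = chi_i n j \<or> g = chiI n j)) \<or> g = chi n \<or> g = chiX n"
    by auto
  have bg: "big n g" using g by (auto simp: big_shapes)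
  have ig: "inj_map g" using inj_big[OF bg] .
  have "inW n (pmul w g) \<and> inW n (pmul g w)" if w: "inW n w" for w
  proof
    show "inW n (pmul w g)" using inW_mul_gen[OF n w g] .
    have iw: "inj_map w" using inj_inW[OF w] .
    have "inW n (pmul (pinv w) (pinv g))"
      using inW_mul_gen[OF n inW_pinv[OF n1 w] gen_pinv[OF n1 g]] .
    then have "inW n (pinv (pmul (pinv w) (pinv g)))" by (rule inW_pinv[OF n1])
    also have "pinv (pmul (pinv w) (pinv g)) = pmul g w"
      using pinv_pmul[OF inj_pinv[OF iw] inj_pinv[OF ig]] pinv_pinv[OF iw] pinv_pinv[OF ig] by simp
    finally show "inW n (pmul g w)" .
  qed
  then show ?case using bg inW_def by auto
next
  case (mul a b)
  then show ?case by (metis pmul_assoc)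
next
  case (inv a)
  have ia: "inj_map a" using inj_inW inv by auto
  have "inW n (pmul w (pinv a)) \<and> inW n (pmul (pinv a) w)" if w: "inW n w" for w
  proof
    have iw: "inj_map w" using inj_inW[OF w] .
    have "inW n (pinv (pmul a (pinv w)))" using inv inW_pinv[OF n1 w] inW_pinv[OF n1] by blast
    also have "pinv (pmul a (pinv w)) = pmul w (pinv a)"
      using pinv_pmul[OF ia inj_pinv[OF iw]] pinv_pinv[OF iw] by simp
    finally show "inW n (pmul w (pinv a))" .
    have "inW n (pinv (pmul (pinv w) a))" using inv inW_pinv[OF n1 w] inW_pinv[OF n1] by blast
    also have "pinv (pmul (pinv w) a) = pmul (pinv a) w"
      using pinv_pmul[OF inj_pinv[OF iw] ia] pinv_pinv[OF iw] by simp
    finally show "inW n (pmul (pinv a) w)" .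
  qed
  then show ?case using inv inW_pinv[OF n1] by blast
qed
qed

lemma S_inW: "2 \<le> n \<Longrightarrow> a \<in> S n \<Longrightarrow> inW n a"
  using S_inW_aux by blast


fun act :: "B21 \<Rightarrow> bool \<Rightarrow> bool option" where
  "act One z = Some z"
| "act C z = (if z then Some False else None)"
| "act D z = (if z then None else Some True)"
| "act CD z = (if z then Some True else None)"
| "act DC z = (if z then None else Some False)"
| "act Zero z = None"

lemma act_mul: "act (bmul x y) z = (case act x z of None \<Rightarrow> None | Some w \<Rightarrow> act y w)"
  by (cases x; cases y; cases z; simp)

lemma act_inv: "act (binv x) w = Some z \<longleftrightarrow> act x z = Some w"
  by (cases x; cases z; cases w; simp)

lemma act_inj: "act x z1 = Some w \<Longrightarrow> act x z2 = Some w \<Longrightarrow> z1 = z2"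
  by (cases x; cases z1; cases z2; cases w; simp)

definition sim :: "(nat \<Rightarrow> bool) set \<Rightarrow> pmap \<Rightarrow> ((nat \<Rightarrow> bool) \<Rightarrow> B21) \<Rightarrow> bool" where
  "sim K t \<beta> \<longleftrightarrow> (\<forall>\<kappa>\<in>K. \<forall>p q. t p = Some q \<longrightarrow> act (\<beta> \<kappa>) (\<kappa> p) = Some (\<kappa> q))
     \<and> (\<forall>q. (\<forall>\<kappa>\<in>K. act (\<beta> \<kappa>) (\<kappa> q) \<noteq> None) \<longrightarrow> t q \<noteq> None)
     \<and> (\<forall>q. (\<forall>\<kappa>\<in>K. \<exists>z. act (\<beta> \<kappa>) z = Some (\<kappa> q)) \<longrightarrow> (\<exists>p. t p = Some q))"

lemma sim_mul:
  assumes sa: "sim K a \<beta>1" and sb: "sim K b \<beta>2"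
  shows "sim K (pmul a b) (\<lambda>\<kappa>. bmul (\<beta>1 \<kappa>) (\<beta>2 \<kappa>))"
  unfolding sim_def
proof (intro conjI allI impI ballI)
  fix \<kappa> p q assume k: "\<kappa> \<in> K" and h: "pmul a b p = Some q"
  then obtain r where r: "a p = Some r" "b r = Some q"
    by (auto simp: pmul_def map_comp_def split: option.splits)
  then show "act (bmul (\<beta>1 \<kappa>) (\<beta>2 \<kappa>)) (\<kappa> p) = Some (\<kappa> q)"
    using sa sb k by (simp add: sim_def act_mul)
next
  fix q assume h: "\<forall>\<kappa>\<in>K. act (bmul (\<beta>1 \<kappa>) (\<beta>2 \<kappa>)) (\<kappa> q) \<noteq> None"
  then have "\<forall>\<kappa>\<in>K. act (\<beta>1 \<kappa>) (\<kappa> q) \<noteq> None" by (auto simp: act_mul split: option.splits)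
  then obtain r where r: "a q = Some r" using sa unfolding sim_def by blast
  then have "\<forall>\<kappa>\<in>K. act (\<beta>1 \<kappa>) (\<kappa> q) = Some (\<kappa> r)" using sa unfolding sim_def by blast
  then have "\<forall>\<kappa>\<in>K. act (\<beta>2 \<kappa>) (\<kappa> r) \<noteq> None" using h by (auto simp: act_mul)
  then obtain s where "b r = Some s" using sb unfolding sim_def by blast
  then show "pmul a b q \<noteq> None" using r by (simp add: pmul_def map_comp_def)
next
  fix q assume h: "\<forall>\<kappa>\<in>K. \<exists>z. act (bmul (\<beta>1 \<kappa>) (\<beta>2 \<kappa>)) z = Some (\<kappa> q)"
  then have "\<forall>\<kappa>\<in>K. \<exists>w. act (\<beta>2 \<kappa>) w = Some (\<kappa> q)" by (auto simp: act_mul split: option.splits)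
  then obtain r where r: "b r = Some q" using sb unfolding sim_def by blast
  have "\<forall>\<kappa>\<in>K. \<exists>z. act (\<beta>1 \<kappa>) z = Some (\<kappa> r)"
  proof
    fix \<kappa> assume k: "\<kappa> \<in> K"
    obtain z where z: "act (bmul (\<beta>1 \<kappa>) (\<beta>2 \<kappa>)) z = Some (\<kappa> q)" using h k by blast
    then obtain w where w: "act (\<beta>1 \<kappa>) z = Some w" "act (\<beta>2 \<kappa>) w = Some (\<kappa> q)"
      by (auto simp: act_mul split: option.splits)
    have "act (\<beta>2 \<kappa>) (\<kappa> r) = Some (\<kappa> q)" using sb k r unfolding sim_def by blast
    then have "w = \<kappa> r" using w act_inj by blast
    then show "\<exists>z. act (\<beta>1 \<kappa>) z = Some (\<kappa> r)" using w by blast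
  qed
  then obtain p where "a p = Some r" using sa unfolding sim_def by blast
  then have "pmul a b p = Some q" using r by (simp add: pmul_def map_comp_def)
  then show "\<exists>p. pmul a b p = Some q" by blast
qed

lemma sim_inv:
  assumes sa: "sim K a \<beta>" and ia: "inj_map a"
  shows "sim K (pinv a) (\<lambda>\<kappa>. binv (\<beta> \<kappa>))"
  unfolding sim_def
proof (intro conjI allI impI ballI)
  fix \<kappa> p q assume k: "\<kappa> \<in> K" and h: "pinv a p = Some q"
  then have "a q = Some p" using pinv_iff[OF ia] by auto
  then show "act (binv (\<beta> \<kappa>)) (\<kappa> p) = Some (\<kappa> q)" using sa k by (simp add: sim_def act_inv)
next
  fix q assume h: "\<forall>\<kappa>\<in>K. act (binv (\<beta> \<kappa>)) (\<kappa> q) \<noteq> None"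
  then have "\<forall>\<kappa>\<in>K. \<exists>z. act (\<beta> \<kappa>) z = Some (\<kappa> q)" using act_inv by fastforce
  then obtain p where "a p = Some q" using sa unfolding sim_def by blast
  then show "pinv a q \<noteq> None" using pinv_iff[OF ia] by auto
next
  fix q assume h: "\<forall>\<kappa>\<in>K. \<exists>z. act (binv (\<beta> \<kappa>)) z = Some (\<kappa> q)"
  then have "\<forall>\<kappa>\<in>K. act (\<beta> \<kappa>) (\<kappa> q) \<noteq> None" using act_inv by fastforce
  then obtain r where "a q = Some r" using sa unfolding sim_def by blast
  then show "\<exists>p. pinv a p = Some q" using pinv_iff[OF ia] by auto
qed

lemma sim_unique:
  assumes sa: "sim K a \<beta>" and sb: "sim K b \<beta>"
    and sep: "\<And>p q. p \<noteq> q \<Longrightarrow> \<exists>\<kappa>\<in>K. \<kappa> p \<noteq> \<kappa> q"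
  shows "a = b"
proof -
  have *: "x p = y p" if sx: "sim K x \<beta>" and sy: "sim K y \<beta>" and xp: "x p = Some q" for x y p q
  proof -
    have "\<forall>\<kappa>\<in>K. act (\<beta> \<kappa>) (\<kappa> p) = Some (\<kappa> q)" using sx xp unfolding sim_def by blast
    then have "\<forall>\<kappa>\<in>K. act (\<beta> \<kappa>) (\<kappa> p) \<noteq> None" by auto
    then obtain r where r: "y p = Some r" using sy unfolding sim_def by blast
    have "\<forall>\<kappa>\<in>K. act (\<beta> \<kappa>) (\<kappa> p) = Some (\<kappa> r)" using sy r unfolding sim_def by blast
    then have "\<forall>\<kappa>\<in>K. \<kappa> q = \<kappa> r" using \<open>\<forall>\<kappa>\<in>K. act (\<beta> \<kappa>) (\<kappa> p) = Some (\<kappa> q)\<close> by auto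
    then have "q = r" using sep by blast
    then show ?thesis using xp r by simp
  qed
  show ?thesis
  proof (rule ext)
    fix p show "a p = b p"
    proof (cases "a p")
      case None
      show ?thesis
      proof (cases "b p")
        case (Some q) then show ?thesis using *[OF sb sa] by metis
      qed (simp add: None)
    next
      case (Some q) then show ?thesis using *[OF sa sb] by metis
    qed
  qed
qed

lemma closure_sim:
  assumes base: "\<And>x. x \<in> X \<Longrightarrow> inj_map x \<and> (\<exists>\<beta>. sim K x \<beta>)"
  shows "t \<in> inv_closure X \<Longrightarrow> inj_map t \<and> (\<exists>\<beta>. sim K t \<beta>)"
proof (induction rule: inv_closure.induct)
  case (gen a) then show ?case using base by blast
next
  case (mul a b) then show ?case using inj_pmul sim_mul by blast
next
  case (inv a) then show ?case using inj_pinv sim_inv by blast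
qed

lemma variety_from_sim:
  assumes base: "\<And>x. x \<in> X \<Longrightarrow> inj_map x \<and> (\<exists>\<beta>. sim K x \<beta>)"
    and sep: "\<And>p q. p \<noteq> q \<Longrightarrow> \<exists>\<kappa>\<in>K. \<kappa> p \<noteq> \<kappa> q"
  shows "in_var_B21 (inv_closure X) pmul pinv"
  unfolding in_var_B21_def satisfies_def
proof (intro allI impI)
  fix s t :: trm and \<sigma> :: "nat \<Rightarrow> pmap"
  assume st: "\<forall>\<sigma>. (\<forall>k. \<sigma> k \<in> (UNIV :: B21 set)) \<longrightarrow> eval bmul binv \<sigma> s = eval bmul binv \<sigma> t"
    and \<sigma>: "\<forall>k. \<sigma> k \<in> inv_closure X"
  define \<beta> where "\<beta> k = (SOME \<beta>. sim K (\<sigma> k) \<beta>)" for k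
  have s\<beta>: "sim K (\<sigma> k) (\<beta> k)" for k
    using closure_sim[OF base \<sigma>[rule_format, of k]] unfolding \<beta>_def by (metis someI_ex)
  have ev: "eval pmul pinv \<sigma> u \<in> inv_closure X \<and>
      sim K (eval pmul pinv \<sigma> u) (\<lambda>\<kappa>. eval bmul binv (\<lambda>k. \<beta> k \<kappa>) u)" for u
  proof (induction u)
    case (Var k) then show ?case using \<sigma> s\<beta> by simp
  next
    case (Mul u1 u2) then show ?case using sim_mul inv_closure.mul by simp
  next
    case (Inv u)
    have "inj_map (eval pmul pinv \<sigma> u)" using closure_sim[OF base] Inv by blast
    then show ?case using Inv sim_inv inv_closure.inv by simp
  qed
  have "(\<lambda>\<kappa>. eval bmul binv (\<lambda>k. \<beta> k \<kappa>) s) = (\<lambda>\<kappa>. eval bmul binv (\<lambda>k. \<beta> k \<kappa>) t)"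
    using st by auto
  then show "eval pmul pinv \<sigma> s = eval pmul pinv \<sigma> t"
    using sim_unique[OF _ _ sep] ev by metis
qed


definition compat :: "(nat \<Rightarrow> bool) \<Rightarrow> pmap \<Rightarrow> bool" where
  "compat \<kappa> x \<longleftrightarrow> (\<forall>p q. x p = Some q \<longrightarrow> \<kappa> p = \<kappa> q)
     \<or> (\<forall>p q. x p = Some q \<longrightarrow> \<kappa> p \<and> \<not> \<kappa> q)
     \<or> (\<forall>p q. x p = Some q \<longrightarrow> \<not> \<kappa> p \<and> \<kappa> q)"

definition tau :: "(nat \<Rightarrow> bool) \<Rightarrow> pmap \<Rightarrow> B21" where
  "tau \<kappa> x = (if \<exists>p q. x p = Some q \<and> \<kappa> p \<and> \<not> \<kappa> q then C
     else if \<exists>p q. x p = Some q \<and> \<not> \<kappa> p \<and> \<kappa> q then D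
     else if \<exists>p q. x p = Some q \<and> \<kappa> p \<and> \<kappa> q then
       (if \<exists>p q. x p = Some q \<and> \<not> \<kappa> p \<and> \<not> \<kappa> q then One else CD)
     else if \<exists>p q. x p = Some q \<and> \<not> \<kappa> p \<and> \<not> \<kappa> q then DC else Zero)"

lemma tau_act:
  assumes "compat \<kappa> x"
  shows "act (tau \<kappa> x) z = Some w \<longleftrightarrow> (\<exists>p q. x p = Some q \<and> \<kappa> p = z \<and> \<kappa> q = w)"
proof -
  define TT where "TT = (\<exists>p q. x p = Some q \<and> \<kappa> p \<and> \<kappa> q)"
  define FF where "FF = (\<exists>p q. x p = Some q \<and> \<not> \<kappa> p \<and> \<not> \<kappa> q)"
  define TF where "TF = (\<exists>p q. x p = Some q \<and> \<kappa> p \<and> \<not> \<kappa> q)"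
  define FT where "FT = (\<exists>p q. x p = Some q \<and> \<not> \<kappa> p \<and> \<kappa> q)"
  have R: "(\<exists>p q. x p = Some q \<and> \<kappa> p = z \<and> \<kappa> q = w) =
     (if z then (if w then TT else TF) else (if w then FT else FF))"
    unfolding TT_def FF_def TF_def FT_def by (cases z; cases w) auto
  have T: "tau \<kappa> x = (if TF then C else if FT then D else if TT then (if FF then One else CD)
     else if FF then DC else Zero)"
    unfolding tau_def TT_def FF_def TF_def FT_def by simp
  have c: "(\<not> TF \<and> \<not> FT) \<or> (\<not> TT \<and> \<not> FF \<and> \<not> FT) \<or> (\<not> TT \<and> \<not> FF \<and> \<not> TF)"
    using assms unfolding compat_def TT_def FF_def TF_def FT_def by blast
  show ?thesis unfolding R T using c
    by (cases TT; cases FF; cases TF; cases FT; cases z; cases w; simp)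
qed

lemma sim_base:
  assumes cp: "\<forall>\<kappa>\<in>K. compat \<kappa> x"
    and dref: "\<And>q. x q = None \<Longrightarrow> \<exists>\<kappa>\<in>K. \<forall>p r. x p = Some r \<longrightarrow> \<kappa> p \<noteq> \<kappa> q"
    and rref: "\<And>q. (\<forall>p. x p \<noteq> Some q) \<Longrightarrow> \<exists>\<kappa>\<in>K. \<forall>p r. x p = Some r \<longrightarrow> \<kappa> r \<noteq> \<kappa> q"
  shows "sim K x (\<lambda>\<kappa>. tau \<kappa> x)"
  unfolding sim_def
proof (intro conjI allI impI ballI)
  fix \<kappa> p q assume "\<kappa> \<in> K" "x p = Some q"
  then show "act (tau \<kappa> x) (\<kappa> p) = Some (\<kappa> q)" using tau_act cp by blast
next
  fix q assume h: "\<forall>\<kappa>\<in>K. act (tau \<kappa> x) (\<kappa> q) \<noteq> None"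
  show "x q \<noteq> None"
  proof
    assume "x q = None"
    then obtain \<kappa> where k: "\<kappa> \<in> K" "\<forall>p r. x p = Some r \<longrightarrow> \<kappa> p \<noteq> \<kappa> q" using dref by blast
    then obtain w where "act (tau \<kappa> x) (\<kappa> q) = Some w" using h by blast
    then show False using tau_act cp k by blast
  qed
next
  fix q assume h: "\<forall>\<kappa>\<in>K. \<exists>z. act (tau \<kappa> x) z = Some (\<kappa> q)"
  show "\<exists>p. x p = Some q"
  proof (rule ccontr)
    assume "\<nexists>p. x p = Some q"
    then obtain \<kappa> where k: "\<kappa> \<in> K" "\<forall>p r. x p = Some r \<longrightarrow> \<kappa> r \<noteq> \<kappa> q" using rref by blast
    then obtain z where "act (tau \<kappa> x) z = Some (\<kappa> q)" using h by blast
    then show False using tau_act cp k by blast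
  qed
qed

lemma compat_R1: "R1 x \<Longrightarrow> compat \<kappa> x"
  unfolding compat_def R1_def
  by (metis option.distinct(1) option.inject)

lemma compat_id: "(\<And>p q. x p = Some q \<Longrightarrow> p = q) \<Longrightarrow> compat \<kappa> x"
  unfolding compat_def by blast


definition Ibad :: "nat \<Rightarrow> pmap set \<Rightarrow> nat set" where
  "Ibad n X = {k. chi_i n k \<in> X \<or> chiI n k \<in> X}"
definition Fr :: "nat \<Rightarrow> pmap set \<Rightarrow> nat \<Rightarrow> bool" where
  "Fr n X k \<longleftrightarrow> 1 \<le> k \<and> k \<le> n \<and> k \<notin> Ibad n X"

definition Phi1 :: "nat \<Rightarrow> (nat \<Rightarrow> bool) \<Rightarrow> nat \<Rightarrow> bool" where
  "Phi1 n \<alpha> p = (if p \<le> n then \<alpha> p else if p \<le> 2*n+1 then \<not> \<alpha> (p - (n+1)) else \<alpha> (p - (2*n+2)))"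
definition Phi2 :: "nat \<Rightarrow> nat \<Rightarrow> nat \<Rightarrow> bool" where
  "Phi2 n k p = (p \<le> n \<or> (n < p \<and> p \<le> 2*n+1 \<and> p - (n+1) < k))"
definition Phi3 :: "nat \<Rightarrow> nat \<Rightarrow> nat \<Rightarrow> bool" where
  "Phi3 n k p = (if p \<le> n then p < k else if p \<le> 2*n+1 then p - (n+1) < k else p - (2*n+2) < k)"
definition Phi4 :: "nat \<Rightarrow> nat \<Rightarrow> bool" where
  "Phi4 m p = (p = m)"

definition KK :: "nat \<Rightarrow> pmap set \<Rightarrow> (nat \<Rightarrow> bool) set" where
  "KK n X = {Phi1 n \<alpha> | \<alpha>. \<alpha> 0 \<noteq> \<alpha> n} \<union> {Phi2 n k | k. Fr n X k} \<union> {Phi3 n k | k. Fr n X k}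
     \<union> {Phi4 m | m. 3*n+2 < m}"

lemma K1: "\<alpha> 0 \<noteq> \<alpha> n \<Longrightarrow> Phi1 n \<alpha> \<in> KK n X" unfolding KK_def by blast
lemma K2: "Fr n X k \<Longrightarrow> Phi2 n k \<in> KK n X" unfolding KK_def by blast
lemma K3: "Fr n X k \<Longrightarrow> Phi3 n k \<in> KK n X" unfolding KK_def by blast
lemma K4: "3*n+2 < m \<Longrightarrow> Phi4 m \<in> KK n X" unfolding KK_def by blast

lemma regions:
  fixes q n :: nat
  obtains (A) "q \<le> n" | (B) l where "q = n+1+l" "l \<le> n" | (Cc) l where "q = 2*n+2+l" "l \<le> n"
    | (O) "3*n+2 < q"
proof -
  consider "(q::nat) \<le> n" | "n < q \<and> q \<le> 2*n+1" | "2*n+1 < q \<and> q \<le> 3*n+2" | "3*n+2 < q" by linarith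
  then show ?thesis
  proof cases
    case 1 then show ?thesis using that by blast
  next
    case 2 then show ?thesis using that(2)[of "q - (n+1)"] by auto
  next
    case 3 then show ?thesis using that(3)[of "q - (2*n+2)"] by auto
  next
    case 4 then show ?thesis using that by blast
  qed
qed

lemma refl_AC:
  assumes n: "2 \<le> n" and a: "a \<le> n" and q: "q \<noteq> a" "q \<noteq> 2*n+2+a" and F: "\<exists>k. Fr n X k"
  shows "\<exists>\<kappa>\<in>KK n X. \<kappa> q \<noteq> \<kappa> a \<and> \<kappa> q \<noteq> \<kappa> (2*n+2+a)"
proof (cases q rule: regions[of _ n])
  case A
  let ?\<alpha> = "\<lambda>x. x < max a q"
  have "Phi1 n ?\<alpha> \<in> KK n X" using A a q n by (intro K1) (auto simp: max_def)
  moreover have "Phi1 n ?\<alpha> q \<noteq> Phi1 n ?\<alpha> a \<and> Phi1 n ?\<alpha> q \<noteq> Phi1 n ?\<alpha> (2*n+2+a)"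
    using A a q by (auto simp: Phi1_def max_def)
  ultimately show ?thesis by blast
next
  case (Cc l)
  let ?\<alpha> = "\<lambda>x. x < max a l"
  have "l \<noteq> a" using Cc q by auto
  then have "Phi1 n ?\<alpha> \<in> KK n X" using Cc a n by (intro K1) (auto simp: max_def)
  moreover have "Phi1 n ?\<alpha> q \<noteq> Phi1 n ?\<alpha> a \<and> Phi1 n ?\<alpha> q \<noteq> Phi1 n ?\<alpha> (2*n+2+a)"
    using Cc a \<open>l \<noteq> a\<close> by (auto simp: Phi1_def max_def)
  ultimately show ?thesis by blast
next
  case (B l)
  show ?thesis
  proof (cases "l = a \<or> (a \<noteq> 0 \<and> l \<noteq> 0)")
    case True
    let ?\<alpha> = "\<lambda>x. x = 0"
    have "Phi1 n ?\<alpha> \<in> KK n X" using n by (intro K1) auto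
    moreover have "Phi1 n ?\<alpha> q \<noteq> Phi1 n ?\<alpha> a \<and> Phi1 n ?\<alpha> q \<noteq> Phi1 n ?\<alpha> (2*n+2+a)"
      using B a True by (auto simp: Phi1_def)
    ultimately show ?thesis by blast
  next
    case False
    show ?thesis
    proof (cases "a \<noteq> n \<and> l \<noteq> n")
      case True
      let ?\<alpha> = "\<lambda>x. x = n"
      have "Phi1 n ?\<alpha> \<in> KK n X" using n by (intro K1) auto
      moreover have "Phi1 n ?\<alpha> q \<noteq> Phi1 n ?\<alpha> a \<and> Phi1 n ?\<alpha> q \<noteq> Phi1 n ?\<alpha> (2*n+2+a)"
        using B a True by (auto simp: Phi1_def)
      ultimately show ?thesis by blast
    next
      case False2: False
      obtain k where k: "Fr n X k" using F by blast
      have "(a = 0 \<and> l = n) \<or> (a = n \<and> l = 0)" using False False2 n by auto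
      moreover have "1 \<le> k" "k \<le> n" using k by (auto simp: Fr_def)
      ultimately have "Phi3 n k q \<noteq> Phi3 n k a \<and> Phi3 n k q \<noteq> Phi3 n k (2*n+2+a)"
        using B a by (auto simp: Phi3_def)
      then show ?thesis using K3[OF k] by blast
    qed
  qed
next
  case O
  have "Phi4 q q \<noteq> Phi4 q a \<and> Phi4 q q \<noteq> Phi4 q (2*n+2+a)" using O a by (auto simp: Phi4_def)
  then show ?thesis using K4[OF O] by blast
qed

lemma regions2:
  fixes q n :: nat
  obtains (AC) l where "q = l \<or> q = 2*n+2+l" "l \<le> n" | (B) l where "q = n+1+l" "l \<le> n"
    | (O) "3*n+2 < q"
  by (cases q rule: regions[of _ n]) auto

lemma Phi1_AC: "l \<le> n \<Longrightarrow> q = l \<or> q = 2*n+2+l \<Longrightarrow> Phi1 n \<alpha> q = \<alpha> l"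
  by (auto simp: Phi1_def)
lemma Phi3_AC: "l \<le> n \<Longrightarrow> q = l \<or> q = 2*n+2+l \<Longrightarrow> Phi3 n k q = (l < k)"
  by (auto simp: Phi3_def)

lemma refl_B:
  assumes n: "2 \<le> n" and l: "l \<le> n" and q: "q \<noteq> n+1+l" and F: "\<exists>k. Fr n X k"
  shows "\<exists>\<kappa>\<in>KK n X. \<kappa> q \<noteq> \<kappa> (n+1+l)"
proof (cases q rule: regions2[of _ n])
  case (AC m)
  have h1: "n+1+l \<noteq> m" and h2: "n+1+l \<noteq> 2*n+2+m" using AC l by auto
  obtain \<kappa> where k: "\<kappa> \<in> KK n X" "\<kappa> (n+1+l) \<noteq> \<kappa> m \<and> \<kappa> (n+1+l) \<noteq> \<kappa> (2*n+2+m)"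
    using refl_AC[OF n AC(2) h1 h2 F] by blast
  have "\<kappa> q \<noteq> \<kappa> (n+1+l)" using k(2) AC(1) by metis
  then show ?thesis using k(1) by blast
next
  case (B m)
  let ?\<alpha> = "\<lambda>x. x < max l m"
  have "m \<noteq> l" using B q by auto
  then have "Phi1 n ?\<alpha> \<in> KK n X" using B l n by (intro K1) (auto simp: max_def)
  moreover have "Phi1 n ?\<alpha> q \<noteq> Phi1 n ?\<alpha> (n+1+l)"
    using B l \<open>m \<noteq> l\<close> by (auto simp: Phi1_def max_def)
  ultimately show ?thesis by blast
next
  case O
  have "Phi4 q q \<noteq> Phi4 q (n+1+l)" using O l by (auto simp: Phi4_def)
  then show ?thesis using K4[OF O] by blast
qed

lemma sep_all:
  assumes n: "2 \<le> n" and pq: "p \<noteq> q" and F: "\<exists>k. Fr n X k"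
  shows "\<exists>\<kappa>\<in>KK n X. \<kappa> p \<noteq> \<kappa> q"
proof (cases p rule: regions2[of _ n])
  case (AC a)
  show ?thesis
  proof (cases "q = a \<or> q = 2*n+2+a")
    case True
    obtain k where k: "Fr n X k" using F by blast
    have "Phi2 n k p \<noteq> Phi2 n k q" using AC True pq by (auto simp: Phi2_def)
    then show ?thesis using K2[OF k] by blast
  next
    case False
    then have h1: "q \<noteq> a" and h2: "q \<noteq> 2*n+2+a" by auto
  obtain \<kappa> where k: "\<kappa> \<in> KK n X" "\<kappa> q \<noteq> \<kappa> a \<and> \<kappa> q \<noteq> \<kappa> (2*n+2+a)"
    using refl_AC[OF n AC(2) h1 h2 F] by blast
  have "\<kappa> p \<noteq> \<kappa> q" using k(2) AC(1) by metis
  then show ?thesis using k(1) by blast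
  qed
next
  case (B l)
  have h: "q \<noteq> n+1+l" using B pq by auto
  obtain \<kappa> where k: "\<kappa> \<in> KK n X" "\<kappa> q \<noteq> \<kappa> (n+1+l)"
    using refl_B[OF n B(2) h F] by blast
  have "\<kappa> p \<noteq> \<kappa> q" using k(2) B(1) by metis
  then show ?thesis using k(1) by blast
next
  case O
  have "Phi4 p p \<noteq> Phi4 p q" using pq by (auto simp: Phi4_def)
  then show ?thesis using K4[OF O] by blast
qed

lemma refl_S4:
  assumes n: "2 \<le> n" and q: "q \<noteq> n" "q \<noteq> n+1" and F: "\<exists>k. Fr n X k"
  shows "\<exists>\<kappa>\<in>KK n X. \<kappa> q \<noteq> \<kappa> n \<and> \<kappa> q \<noteq> \<kappa> (n+1)"
proof (cases q rule: regions2[of _ n])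
  case (AC l)
  show ?thesis
  proof (cases "q = 2*n+2+n")
    case True
    obtain k where k: "Fr n X k" using F by blast
    have "1 \<le> k" using k by (auto simp: Fr_def)
    then have "Phi2 n k q \<noteq> Phi2 n k n \<and> Phi2 n k q \<noteq> Phi2 n k (n+1)" using True by (auto simp: Phi2_def)
    then show ?thesis using K2[OF k] by blast
  next
    case False
    then have "l < n" using AC q by auto
    let ?\<alpha> = "\<lambda>x. x < n"
    have "Phi1 n ?\<alpha> \<in> KK n X" using n by (intro K1) auto
    moreover have "Phi1 n ?\<alpha> q \<noteq> Phi1 n ?\<alpha> n \<and> Phi1 n ?\<alpha> q \<noteq> Phi1 n ?\<alpha> (n+1)"
      using AC \<open>l < n\<close> n by (auto simp: Phi1_def)
    ultimately show ?thesis by blast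
  qed
next
  case (B l)
  let ?\<alpha> = "\<lambda>x. x = 0"
  have "l \<noteq> 0" using B q by auto
  have "Phi1 n ?\<alpha> \<in> KK n X" using n by (intro K1) auto
  moreover have "Phi1 n ?\<alpha> q \<noteq> Phi1 n ?\<alpha> n \<and> Phi1 n ?\<alpha> q \<noteq> Phi1 n ?\<alpha> (n+1)"
    using B \<open>l \<noteq> 0\<close> n by (auto simp: Phi1_def)
  ultimately show ?thesis by blast
next
  case O
  have "Phi4 q q \<noteq> Phi4 q n \<and> Phi4 q q \<noteq> Phi4 q (n+1)" using O by (auto simp: Phi4_def)
  then show ?thesis using K4[OF O] by blast
qed

lemma refl_S5:
  assumes n: "2 \<le> n" and q: "q \<noteq> 2*n+1" "q \<noteq> 2*n+2" and F: "\<exists>k. Fr n X k"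
  shows "\<exists>\<kappa>\<in>KK n X. \<kappa> q \<noteq> \<kappa> (2*n+1) \<and> \<kappa> q \<noteq> \<kappa> (2*n+2)"
proof (cases q rule: regions2[of _ n])
  case (AC l)
  show ?thesis
  proof (cases "q = 0")
    case True
    obtain k where k: "Fr n X k" using F by blast
    have "k \<le> n" using k by (auto simp: Fr_def)
    then have "Phi2 n k q \<noteq> Phi2 n k (2*n+1) \<and> Phi2 n k q \<noteq> Phi2 n k (2*n+2)" using True by (auto simp: Phi2_def)
    then show ?thesis using K2[OF k] by blast
  next
    case False
    then have "l \<noteq> 0" using AC q by auto
    let ?\<alpha> = "\<lambda>x. x = 0"
    have "Phi1 n ?\<alpha> \<in> KK n X" using n by (intro K1) auto
    moreover have "Phi1 n ?\<alpha> q \<noteq> Phi1 n ?\<alpha> (2*n+1) \<and> Phi1 n ?\<alpha> q \<noteq> Phi1 n ?\<alpha> (2*n+2)"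
      using AC \<open>l \<noteq> 0\<close> n by (auto simp: Phi1_def)
    ultimately show ?thesis by blast
  qed
next
  case (B l)
  let ?\<alpha> = "\<lambda>x. x = n"
  have "l \<noteq> n" using B q by auto
  have "Phi1 n ?\<alpha> \<in> KK n X" using n by (intro K1) auto
  moreover have "Phi1 n ?\<alpha> q \<noteq> Phi1 n ?\<alpha> (2*n+1) \<and> Phi1 n ?\<alpha> q \<noteq> Phi1 n ?\<alpha> (2*n+2)"
    using B \<open>l \<noteq> n\<close> n by (auto simp: Phi1_def)
  ultimately show ?thesis by blast
next
  case O
  have "Phi4 q q \<noteq> Phi4 q (2*n+1) \<and> Phi4 q q \<noteq> Phi4 q (2*n+2)" using O by (auto simp: Phi4_def)
  then show ?thesis using K4[OF O] by blast
qed

lemma refl_S2: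
  assumes n: "2 \<le> n" and i1: "1 \<le> i" and i2: "i \<le> n"
    and q: "q \<noteq> i - 1" "q \<noteq> n+1+i" "q \<noteq> 2*n+1+i" and F: "\<exists>k. Fr n X k"
    and Flo: "i = n \<Longrightarrow> \<exists>k. Fr n X k \<and> k + 1 \<le> n"
    and Fhi: "i = 1 \<Longrightarrow> \<exists>k. Fr n X k \<and> 2 \<le> k"
  shows "\<exists>\<kappa>\<in>KK n X. \<kappa> q \<noteq> \<kappa> (i - 1) \<and> \<kappa> q \<noteq> \<kappa> (n+1+i) \<and> \<kappa> q \<noteq> \<kappa> (2*n+1+i)"
proof (cases q rule: regions2[of _ n])
  case (AC l)
  have lne: "l \<noteq> i - 1" using AC q i1 by auto
  have ql: "Phi1 n \<alpha> q = \<alpha> l" for \<alpha> using Phi1_AC[OF AC(2,1)] .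
  have q3: "Phi3 n k q = (l < k)" for k using Phi3_AC[OF AC(2,1)] .
  show ?thesis
  proof (cases "l = 0")
    case False
    let ?\<alpha> = "\<lambda>x. x = i - 1 \<or> x = 0"
    have "Phi1 n ?\<alpha> \<in> KK n X" using n i2 i1 by (intro K1) auto
    moreover have "Phi1 n ?\<alpha> q \<noteq> Phi1 n ?\<alpha> (i - 1) \<and> Phi1 n ?\<alpha> q \<noteq> Phi1 n ?\<alpha> (n+1+i)
        \<and> Phi1 n ?\<alpha> q \<noteq> Phi1 n ?\<alpha> (2*n+1+i)"
      unfolding ql using False lne i1 i2 by (auto simp: Phi1_def)
    ultimately show ?thesis by blast
  next
    case True
    show ?thesis
    proof (cases "i = n")
      case False
      let ?\<alpha> = "\<lambda>x. x < i - 1 \<or> x = i"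
      have "i \<ge> 2" using True lne i1 by auto
      then have "Phi1 n ?\<alpha> \<in> KK n X" using n i2 False by (intro K1) auto
      moreover have "Phi1 n ?\<alpha> q \<noteq> Phi1 n ?\<alpha> (i - 1) \<and> Phi1 n ?\<alpha> q \<noteq> Phi1 n ?\<alpha> (n+1+i)
          \<and> Phi1 n ?\<alpha> q \<noteq> Phi1 n ?\<alpha> (2*n+1+i)"
        unfolding ql using True \<open>i \<ge> 2\<close> i2 by (auto simp: Phi1_def)
      ultimately show ?thesis by blast
    next
      case iN: True
      obtain k where k: "Fr n X k" "k + 1 \<le> n" using Flo[OF iN] by blast
      have "1 \<le> k" using k by (auto simp: Fr_def)
      have "Phi3 n k q \<noteq> Phi3 n k (i - 1) \<and> Phi3 n k q \<noteq> Phi3 n k (n+1+i)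
          \<and> Phi3 n k q \<noteq> Phi3 n k (2*n+1+i)"
        unfolding q3 using True iN k(2) \<open>1 \<le> k\<close> n by (auto simp: Phi3_def)
      then show ?thesis using K3[OF k(1)] by blast
    qed
  qed
next
  case (B l)
  have lne: "l \<noteq> i" using B q by auto
  show ?thesis
  proof (cases "i = n")
    case True
    let ?\<alpha> = "\<lambda>x. x \<noteq> n"
    have "Phi1 n ?\<alpha> \<in> KK n X" using n by (intro K1) auto
    moreover have "Phi1 n ?\<alpha> q \<noteq> Phi1 n ?\<alpha> (i - 1) \<and> Phi1 n ?\<alpha> q \<noteq> Phi1 n ?\<alpha> (n+1+i)
        \<and> Phi1 n ?\<alpha> q \<noteq> Phi1 n ?\<alpha> (2*n+1+i)"
      using B True lne i1 n by (auto simp: Phi1_def)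
    ultimately show ?thesis by blast
  next
    case iN: False
    show ?thesis
    proof (cases "l = n")
      case False
      let ?\<alpha> = "\<lambda>x. x \<noteq> i \<and> x \<noteq> n"
      have "Phi1 n ?\<alpha> \<in> KK n X" using n i1 by (intro K1) auto
      moreover have "Phi1 n ?\<alpha> q \<noteq> Phi1 n ?\<alpha> (i - 1) \<and> Phi1 n ?\<alpha> q \<noteq> Phi1 n ?\<alpha> (n+1+i)
          \<and> Phi1 n ?\<alpha> q \<noteq> Phi1 n ?\<alpha> (2*n+1+i)"
        using B False iN lne i1 i2 by (auto simp: Phi1_def)
      ultimately show ?thesis by blast
    next
      case lN: True
      show ?thesis
      proof (cases "i = 1")
        case False
        let ?\<alpha> = "\<lambda>x. x = i \<or> x = 0"
        have "Phi1 n ?\<alpha> \<in> KK n X" using n iN by (intro K1) auto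
        moreover have "Phi1 n ?\<alpha> q \<noteq> Phi1 n ?\<alpha> (i - 1) \<and> Phi1 n ?\<alpha> q \<noteq> Phi1 n ?\<alpha> (n+1+i)
            \<and> Phi1 n ?\<alpha> q \<noteq> Phi1 n ?\<alpha> (2*n+1+i)"
          using B lN False iN i1 i2 by (auto simp: Phi1_def)
        ultimately show ?thesis by blast
      next
        case i1': True
        obtain k where k: "Fr n X k" "2 \<le> k" using Fhi[OF i1'] by blast
        have "k \<le> n" using k by (auto simp: Fr_def)
        have "Phi3 n k q \<noteq> Phi3 n k (i - 1) \<and> Phi3 n k q \<noteq> Phi3 n k (n+1+i)
            \<and> Phi3 n k q \<noteq> Phi3 n k (2*n+1+i)"
          using B lN i1' k(2) \<open>k \<le> n\<close> by (auto simp: Phi3_def)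
        then show ?thesis using K3[OF k(1)] by blast
      qed
    qed
  qed
next
  case O
  have "Phi4 q q \<noteq> Phi4 q (i - 1) \<and> Phi4 q q \<noteq> Phi4 q (n+1+i) \<and> Phi4 q q \<noteq> Phi4 q (2*n+1+i)"
    using O i2 by (auto simp: Phi4_def)
  then show ?thesis using K4[OF O] by blast
qed

lemma refl_S3:
  assumes n: "2 \<le> n" and i1: "1 \<le> i" and i2: "i \<le> n"
    and q: "q \<noteq> i" "q \<noteq> n+i" "q \<noteq> 2*n+2+i" and F: "\<exists>k. Fr n X k"
    and Flo: "i = n \<Longrightarrow> \<exists>k. Fr n X k \<and> k + 1 \<le> n"
    and Fhi: "i = 1 \<Longrightarrow> \<exists>k. Fr n X k \<and> 2 \<le> k"
  shows "\<exists>\<kappa>\<in>KK n X. \<kappa> q \<noteq> \<kappa> i \<and> \<kappa> q \<noteq> \<kappa> (n+i) \<and> \<kappa> q \<noteq> \<kappa> (2*n+2+i)"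
proof (cases q rule: regions2[of _ n])
  case (AC l)
  have lne: "l \<noteq> i" using AC q i1 by auto
  have ql: "Phi1 n \<alpha> q = \<alpha> l" for \<alpha> using Phi1_AC[OF AC(2,1)] .
  have q3: "Phi3 n k q = (l < k)" for k using Phi3_AC[OF AC(2,1)] .
  show ?thesis
  proof (cases "l = n")
    case False
    let ?\<alpha> = "\<lambda>x. x = i \<or> x = n"
    have "Phi1 n ?\<alpha> \<in> KK n X" using n i2 i1 by (intro K1) auto
    moreover have "Phi1 n ?\<alpha> q \<noteq> Phi1 n ?\<alpha> i \<and> Phi1 n ?\<alpha> q \<noteq> Phi1 n ?\<alpha> (n+i)
        \<and> Phi1 n ?\<alpha> q \<noteq> Phi1 n ?\<alpha> (2*n+2+i)"
      unfolding ql using False lne i1 i2 by (auto simp: Phi1_def)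
    ultimately show ?thesis by blast
  next
    case True
    show ?thesis
    proof (cases "i = 1")
      case False
      let ?\<alpha> = "\<lambda>x. x = i \<or> x = 0"
      have "Phi1 n ?\<alpha> \<in> KK n X" using n i2 True lne by (intro K1) auto
      moreover have "Phi1 n ?\<alpha> q \<noteq> Phi1 n ?\<alpha> i \<and> Phi1 n ?\<alpha> q \<noteq> Phi1 n ?\<alpha> (n+i)
          \<and> Phi1 n ?\<alpha> q \<noteq> Phi1 n ?\<alpha> (2*n+2+i)"
        unfolding ql using True False lne i1 i2 by (auto simp: Phi1_def)
      ultimately show ?thesis by blast
    next
      case iO: True
      obtain k where k: "Fr n X k" "2 \<le> k" using Fhi[OF iO] by blast
      have "k \<le> n" using k by (auto simp: Fr_def)
      have "Phi3 n k q \<noteq> Phi3 n k i \<and> Phi3 n k q \<noteq> Phi3 n k (n+i)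
          \<and> Phi3 n k q \<noteq> Phi3 n k (2*n+2+i)"
        unfolding q3 using True iO k(2) \<open>k \<le> n\<close> n by (auto simp: Phi3_def)
      then show ?thesis using K3[OF k(1)] by blast
    qed
  qed
next
  case (B l)
  have lne: "l \<noteq> i - 1" using B q i1 by auto
  show ?thesis
  proof (cases "l = 0")
    case False
    let ?\<alpha> = "\<lambda>x. x = i - 1 \<or> x = 0"
    have "Phi1 n ?\<alpha> \<in> KK n X" using n i1 i2 by (intro K1) auto
    moreover have "Phi1 n ?\<alpha> q \<noteq> Phi1 n ?\<alpha> i \<and> Phi1 n ?\<alpha> q \<noteq> Phi1 n ?\<alpha> (n+i)
        \<and> Phi1 n ?\<alpha> q \<noteq> Phi1 n ?\<alpha> (2*n+2+i)"
      using B False lne i1 i2 by (auto simp: Phi1_def)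
    ultimately show ?thesis by blast
  next
    case l0: True
    show ?thesis
    proof (cases "i = n")
      case False
      let ?\<alpha> = "\<lambda>x. x = i - 1 \<or> x = n"
      have "i \<ge> 2" using l0 lne i1 by auto
      then have "Phi1 n ?\<alpha> \<in> KK n X" using n by (intro K1) auto
      moreover have "Phi1 n ?\<alpha> q \<noteq> Phi1 n ?\<alpha> i \<and> Phi1 n ?\<alpha> q \<noteq> Phi1 n ?\<alpha> (n+i)
          \<and> Phi1 n ?\<alpha> q \<noteq> Phi1 n ?\<alpha> (2*n+2+i)"
        using B l0 False \<open>i \<ge> 2\<close> i2 by (auto simp: Phi1_def)
      ultimately show ?thesis by blast
    next
      case iN: True
      obtain k where k: "Fr n X k" "k + 1 \<le> n" using Flo[OF iN] by blast
      have "1 \<le> k" using k by (auto simp: Fr_def)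
      have "Phi3 n k q \<noteq> Phi3 n k i \<and> Phi3 n k q \<noteq> Phi3 n k (n+i)
          \<and> Phi3 n k q \<noteq> Phi3 n k (2*n+2+i)"
        using B l0 iN k(2) \<open>1 \<le> k\<close> n by (auto simp: Phi3_def)
      then show ?thesis using K3[OF k(1)] by blast
    qed
  qed
next
  case O
  have "Phi4 q q \<noteq> Phi4 q i \<and> Phi4 q q \<noteq> Phi4 q (n+i) \<and> Phi4 q q \<noteq> Phi4 q (2*n+2+i)"
    using O i2 by (auto simp: Phi4_def)
  then show ?thesis using K4[OF O] by blast
qed


lemma compat2:
  assumes "\<And>p q. x p = Some q \<Longrightarrow> (p = a1 \<and> q = b1) \<or> (p = a2 \<and> q = b2)"
    and "(\<kappa> a1 = \<kappa> b1 \<and> \<kappa> a2 = \<kappa> b2) \<or> (\<kappa> a1 \<and> \<not> \<kappa> b1 \<and> \<kappa> a2 \<and> \<not> \<kappa> b2)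
       \<or> (\<not> \<kappa> a1 \<and> \<kappa> b1 \<and> \<not> \<kappa> a2 \<and> \<kappa> b2)"
  shows "compat \<kappa> x"
  using assms unfolding compat_def by metis

lemma compat3:
  assumes "\<And>p q. x p = Some q \<Longrightarrow> (p = a1 \<and> q = b1) \<or> (p = a2 \<and> q = b2) \<or> (p = a3 \<and> q = b3)"
    and "(\<kappa> a1 = \<kappa> b1 \<and> \<kappa> a2 = \<kappa> b2 \<and> \<kappa> a3 = \<kappa> b3)
       \<or> (\<kappa> a1 \<and> \<not> \<kappa> b1 \<and> \<kappa> a2 \<and> \<not> \<kappa> b2 \<and> \<kappa> a3 \<and> \<not> \<kappa> b3)
       \<or> (\<not> \<kappa> a1 \<and> \<kappa> b1 \<and> \<not> \<kappa> a2 \<and> \<kappa> b2 \<and> \<not> \<kappa> a3 \<and> \<kappa> b3)"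
  shows "compat \<kappa> x"
  using assms unfolding compat_def by metis

lemma g_acm: "acm n a b p = Some q \<Longrightarrow> (p = a \<and> q = b) \<or> (p = 2*n+2+a \<and> q = 2*n+2+b)"
  by (auto simp: acm_def split: if_splits)
lemma g_chi_i: "chi_i n i p = Some q \<Longrightarrow> (p = i - 1 \<and> q = i) \<or> (p = n+1+i \<and> q = n+i) \<or> (p = 2*n+1+i \<and> q = 2*n+2+i)"
  by (auto simp: chi_i_def split: if_splits)
lemma g_chiI: "chiI n i p = Some q \<Longrightarrow> (p = i \<and> q = i - 1) \<or> (p = n+i \<and> q = n+1+i) \<or> (p = 2*n+2+i \<and> q = 2*n+1+i)"
  by (auto simp: chiI_def split: if_splits)
lemma g_chi: "chi n p = Some q \<Longrightarrow> (p = n \<and> q = 2*n+1) \<or> (p = n+1 \<and> q = 2*n+2)"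
  by (auto simp: chi_def split: if_splits)
lemma g_chiX: "chiX n p = Some q \<Longrightarrow> (p = 2*n+1 \<and> q = n) \<or> (p = 2*n+2 \<and> q = n+1)"
  by (auto simp: chiX_def split: if_splits)

lemma c_acm_1:
  assumes "a \<le> n" and "b \<le> n"
  shows "compat (Phi1 n \<alpha>) (acm n a b)"
proof -
  have e0: "Phi1 n \<alpha> (a) = (\<alpha> a)" using assms by (simp add: Phi1_def)
  have e1: "Phi1 n \<alpha> (b) = (\<alpha> b)" using assms by (simp add: Phi1_def)
  have e2: "Phi1 n \<alpha> (2*n+2+a) = (\<alpha> a)" using assms by (simp add: Phi1_def)
  have e3: "Phi1 n \<alpha> (2*n+2+b) = (\<alpha> b)" using assms by (simp add: Phi1_def)
  show ?thesis
    apply (rule compat2)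
     apply (erule g_acm)
    unfolding e0 e1 e2 e3 by auto
qed

lemma c_acm_2:
  assumes "a \<le> n" and "b \<le> n"
  shows "compat (Phi2 n k) (acm n a b)"
proof -
  have e0: "Phi2 n k (a) = (True)" using assms by (auto simp: Phi2_def)
  have e1: "Phi2 n k (b) = (True)" using assms by (auto simp: Phi2_def)
  have e2: "Phi2 n k (2*n+2+a) = (False)" using assms by (auto simp: Phi2_def)
  have e3: "Phi2 n k (2*n+2+b) = (False)" using assms by (auto simp: Phi2_def)
  show ?thesis
    apply (rule compat2)
     apply (erule g_acm)
    unfolding e0 e1 e2 e3 by auto
qed

lemma c_acm_3:
  assumes "a \<le> n" and "b \<le> n"
  shows "compat (Phi3 n k) (acm n a b)"
proof -
  have e0: "Phi3 n k (a) = (a < k)" using assms by (simp add: Phi3_def)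
  have e1: "Phi3 n k (b) = (b < k)" using assms by (simp add: Phi3_def)
  have e2: "Phi3 n k (2*n+2+a) = (a < k)" using assms by (simp add: Phi3_def)
  have e3: "Phi3 n k (2*n+2+b) = (b < k)" using assms by (simp add: Phi3_def)
  show ?thesis
    apply (rule compat2)
     apply (erule g_acm)
    unfolding e0 e1 e2 e3 by auto
qed

lemma c_chi_i_1:
  assumes "1 \<le> i" and "i \<le> n"
  shows "compat (Phi1 n \<alpha>) (chi_i n i)"
proof -
  have e0: "Phi1 n \<alpha> (i - 1) = (\<alpha> (i - 1))" using assms by (simp add: Phi1_def)
  have e1: "Phi1 n \<alpha> (i) = (\<alpha> i)" using assms by (simp add: Phi1_def)
  have e2: "Phi1 n \<alpha> (n+1+i) = (\<not> \<alpha> i)" using assms by (simp add: Phi1_def)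
  have e3: "Phi1 n \<alpha> (n+i) = (\<not> \<alpha> (i - 1))" using assms by (simp add: Phi1_def)
  have e4: "Phi1 n \<alpha> (2*n+1+i) = (\<alpha> (i - 1))" using assms by (simp add: Phi1_def)
  have e5: "Phi1 n \<alpha> (2*n+2+i) = (\<alpha> i)" using assms by (simp add: Phi1_def)
  show ?thesis
    apply (rule compat3)
     apply (erule g_chi_i)
    unfolding e0 e1 e2 e3 e4 e5 by auto
qed

lemma c_chi_i_2:
  assumes "1 \<le> i" and "i \<le> n" and "k \<noteq> i"
  shows "compat (Phi2 n k) (chi_i n i)"
proof -
  have e0: "Phi2 n k (i - 1) = (True)" using assms by (auto simp: Phi2_def)
  have e1: "Phi2 n k (i) = (True)" using assms by (auto simp: Phi2_def)
  have e2: "Phi2 n k (n+1+i) = (i < k)" using assms by (auto simp: Phi2_def)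
  have e3: "Phi2 n k (n+i) = (i - 1 < k)" using assms by (auto simp: Phi2_def)
  have e4: "Phi2 n k (2*n+1+i) = (False)" using assms by (auto simp: Phi2_def)
  have e5: "Phi2 n k (2*n+2+i) = (False)" using assms by (auto simp: Phi2_def)
  have x: "(i - 1 < k) = (i < k)" using assms by auto
  show ?thesis
    apply (rule compat3)
     apply (erule g_chi_i)
    unfolding e0 e1 e2 e3 e4 e5 x by auto
qed

lemma c_chi_i_3:
  assumes "1 \<le> i" and "i \<le> n" and "k \<noteq> i"
  shows "compat (Phi3 n k) (chi_i n i)"
proof -
  have e0: "Phi3 n k (i - 1) = (i - 1 < k)" using assms by (simp add: Phi3_def)
  have e1: "Phi3 n k (i) = (i < k)" using assms by (simp add: Phi3_def)
  have e2: "Phi3 n k (n+1+i) = (i < k)" using assms by (simp add: Phi3_def)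
  have e3: "Phi3 n k (n+i) = (i - 1 < k)" using assms by (simp add: Phi3_def)
  have e4: "Phi3 n k (2*n+1+i) = (i - 1 < k)" using assms by (simp add: Phi3_def)
  have e5: "Phi3 n k (2*n+2+i) = (i < k)" using assms by (simp add: Phi3_def)
  have x: "(i - 1 < k) = (i < k)" using assms by auto
  show ?thesis
    apply (rule compat3)
     apply (erule g_chi_i)
    unfolding e0 e1 e2 e3 e4 e5 x by auto
qed

lemma c_chiI_1:
  assumes "1 \<le> i" and "i \<le> n"
  shows "compat (Phi1 n \<alpha>) (chiI n i)"
proof -
  have e0: "Phi1 n \<alpha> (i - 1) = (\<alpha> (i - 1))" using assms by (simp add: Phi1_def)
  have e1: "Phi1 n \<alpha> (i) = (\<alpha> i)" using assms by (simp add: Phi1_def)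
  have e2: "Phi1 n \<alpha> (n+1+i) = (\<not> \<alpha> i)" using assms by (simp add: Phi1_def)
  have e3: "Phi1 n \<alpha> (n+i) = (\<not> \<alpha> (i - 1))" using assms by (simp add: Phi1_def)
  have e4: "Phi1 n \<alpha> (2*n+1+i) = (\<alpha> (i - 1))" using assms by (simp add: Phi1_def)
  have e5: "Phi1 n \<alpha> (2*n+2+i) = (\<alpha> i)" using assms by (simp add: Phi1_def)
  show ?thesis
    apply (rule compat3)
     apply (erule g_chiI)
    unfolding e0 e1 e2 e3 e4 e5 by auto
qed

lemma c_chiI_2:
  assumes "1 \<le> i" and "i \<le> n" and "k \<noteq> i"
  shows "compat (Phi2 n k) (chiI n i)"
proof -
  have e0: "Phi2 n k (i - 1) = (True)" using assms by (auto simp: Phi2_def)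
  have e1: "Phi2 n k (i) = (True)" using assms by (auto simp: Phi2_def)
  have e2: "Phi2 n k (n+1+i) = (i < k)" using assms by (auto simp: Phi2_def)
  have e3: "Phi2 n k (n+i) = (i - 1 < k)" using assms by (auto simp: Phi2_def)
  have e4: "Phi2 n k (2*n+1+i) = (False)" using assms by (auto simp: Phi2_def)
  have e5: "Phi2 n k (2*n+2+i) = (False)" using assms by (auto simp: Phi2_def)
  have x: "(i - 1 < k) = (i < k)" using assms by auto
  show ?thesis
    apply (rule compat3)
     apply (erule g_chiI)
    unfolding e0 e1 e2 e3 e4 e5 x by auto
qed

lemma c_chiI_3:
  assumes "1 \<le> i" and "i \<le> n" and "k \<noteq> i"
  shows "compat (Phi3 n k) (chiI n i)"
proof -
  have e0: "Phi3 n k (i - 1) = (i - 1 < k)" using assms by (simp add: Phi3_def)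
  have e1: "Phi3 n k (i) = (i < k)" using assms by (simp add: Phi3_def)
  have e2: "Phi3 n k (n+1+i) = (i < k)" using assms by (simp add: Phi3_def)
  have e3: "Phi3 n k (n+i) = (i - 1 < k)" using assms by (simp add: Phi3_def)
  have e4: "Phi3 n k (2*n+1+i) = (i - 1 < k)" using assms by (simp add: Phi3_def)
  have e5: "Phi3 n k (2*n+2+i) = (i < k)" using assms by (simp add: Phi3_def)
  have x: "(i - 1 < k) = (i < k)" using assms by auto
  show ?thesis
    apply (rule compat3)
     apply (erule g_chiI)
    unfolding e0 e1 e2 e3 e4 e5 x by auto
qed

lemma c_chi_1:
  assumes "\<alpha> 0 \<noteq> \<alpha> n"
  shows "compat (Phi1 n \<alpha>) (chi n)"
proof -
  have e0: "Phi1 n \<alpha> (n) = (\<alpha> n)" using assms by (simp add: Phi1_def)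
  have e1: "Phi1 n \<alpha> (2*n+1) = (\<not> \<alpha> n)" using assms by (simp add: Phi1_def)
  have e2: "Phi1 n \<alpha> (n+1) = (\<not> \<alpha> 0)" using assms by (simp add: Phi1_def)
  have e3: "Phi1 n \<alpha> (2*n+2) = (\<alpha> 0)" using assms by (simp add: Phi1_def)
  have x: "\<alpha> 0 = (\<not> \<alpha> n)" using assms by auto
  show ?thesis
    apply (rule compat2)
     apply (erule g_chi)
    unfolding e0 e1 e2 e3 x by auto
qed

lemma c_chi_2:
  assumes "1 \<le> k" and "k \<le> n"
  shows "compat (Phi2 n k) (chi n)"
proof -
  have e0: "Phi2 n k (n) = (True)" using assms by (auto simp: Phi2_def)
  have e1: "Phi2 n k (2*n+1) = (n < k)" using assms by (auto simp: Phi2_def)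
  have e2: "Phi2 n k (n+1) = (0 < k)" using assms by (auto simp: Phi2_def)
  have e3: "Phi2 n k (2*n+2) = (False)" using assms by (auto simp: Phi2_def)
  have x: "(n < k) = False" "(0 < k) = True" using assms by auto
  show ?thesis
    apply (rule compat2)
     apply (erule g_chi)
    unfolding e0 e1 e2 e3 x by auto
qed

lemma c_chi_3:
  assumes "1 \<le> k" and "k \<le> n"
  shows "compat (Phi3 n k) (chi n)"
proof -
  have e0: "Phi3 n k (n) = (n < k)" using assms by (simp add: Phi3_def)
  have e1: "Phi3 n k (2*n+1) = (n < k)" using assms by (simp add: Phi3_def)
  have e2: "Phi3 n k (n+1) = (0 < k)" using assms by (simp add: Phi3_def)
  have e3: "Phi3 n k (2*n+2) = (0 < k)" using assms by (simp add: Phi3_def)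
  have x: "(n < k) = False" "(0 < k) = True" using assms by auto
  show ?thesis
    apply (rule compat2)
     apply (erule g_chi)
    unfolding e0 e1 e2 e3 x by auto
qed

lemma c_chiX_1:
  assumes "\<alpha> 0 \<noteq> \<alpha> n"
  shows "compat (Phi1 n \<alpha>) (chiX n)"
proof -
  have e0: "Phi1 n \<alpha> (n) = (\<alpha> n)" using assms by (simp add: Phi1_def)
  have e1: "Phi1 n \<alpha> (2*n+1) = (\<not> \<alpha> n)" using assms by (simp add: Phi1_def)
  have e2: "Phi1 n \<alpha> (n+1) = (\<not> \<alpha> 0)" using assms by (simp add: Phi1_def)
  have e3: "Phi1 n \<alpha> (2*n+2) = (\<alpha> 0)" using assms by (simp add: Phi1_def)
  have x: "\<alpha> 0 = (\<not> \<alpha> n)" using assms by auto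
  show ?thesis
    apply (rule compat2)
     apply (erule g_chiX)
    unfolding e0 e1 e2 e3 x by auto
qed

lemma c_chiX_2:
  assumes "1 \<le> k" and "k \<le> n"
  shows "compat (Phi2 n k) (chiX n)"
proof -
  have e0: "Phi2 n k (n) = (True)" using assms by (auto simp: Phi2_def)
  have e1: "Phi2 n k (2*n+1) = (n < k)" using assms by (auto simp: Phi2_def)
  have e2: "Phi2 n k (n+1) = (0 < k)" using assms by (auto simp: Phi2_def)
  have e3: "Phi2 n k (2*n+2) = (False)" using assms by (auto simp: Phi2_def)
  have x: "(n < k) = False" "(0 < k) = True" using assms by auto
  show ?thesis
    apply (rule compat2)
     apply (erule g_chiX)
    unfolding e0 e1 e2 e3 x by auto
qed

lemma c_chiX_3:
  assumes "1 \<le> k" and "k \<le> n"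
  shows "compat (Phi3 n k) (chiX n)"
proof -
  have e0: "Phi3 n k (n) = (n < k)" using assms by (simp add: Phi3_def)
  have e1: "Phi3 n k (2*n+1) = (n < k)" using assms by (simp add: Phi3_def)
  have e2: "Phi3 n k (n+1) = (0 < k)" using assms by (simp add: Phi3_def)
  have e3: "Phi3 n k (2*n+2) = (0 < k)" using assms by (simp add: Phi3_def)
  have x: "(n < k) = False" "(0 < k) = True" using assms by auto
  show ?thesis
    apply (rule compat2)
     apply (erule g_chiX)
    unfolding e0 e1 e2 e3 x by auto
qed

lemma c_4: "bnd n x \<Longrightarrow> 3*n+2 < m \<Longrightarrow> compat (Phi4 m) x"
  unfolding compat_def bnd_def Phi4_def by force

lemma id_Em: "Em n i p = Some q \<Longrightarrow> p = q" by (auto simp: Em_def split: if_splits)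
lemma id_Ep: "Ep n i p = Some q \<Longrightarrow> p = q" by (auto simp: Ep_def split: if_splits)
lemma id_Ea: "Ea n p = Some q \<Longrightarrow> p = q" by (auto simp: Ea_def split: if_splits)
lemma id_Eb: "Eb n p = Some q \<Longrightarrow> p = q" by (auto simp: Eb_def split: if_splits)

lemma compat_all:
  assumes n: "2 \<le> n" and xX: "x \<in> X" and w: "inW n x" and k: "\<kappa> \<in> KK n X"
  shows "compat \<kappa> x"
proof (cases "R1 x")
  case True then show ?thesis by (rule compat_R1)
next
  case False
  then have b: "big n x" using w by (auto simp: inW_def)
  have bx: "bnd n x" using bnd_big[OF b] .
  from k consider (P1) \<alpha> where "\<kappa> = Phi1 n \<alpha>" "\<alpha> 0 \<noteq> \<alpha> n"
    | (P2) k where "\<kappa> = Phi2 n k" "Fr n X k" | (P3) k where "\<kappa> = Phi3 n k" "Fr n X k"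
    | (P4) m where "\<kappa> = Phi4 m" "3*n+2 < m"
    unfolding KK_def by blast
  then show ?thesis
  proof cases
    case (P4 m) then show ?thesis using c_4[OF bx] by simp
  next
    case (P1 \<alpha>)
    show ?thesis using b unfolding big_def P1(1)
      by (elim disjE exE conjE; simp add: c_acm_1 c_chi_i_1 c_chiI_1 c_chi_1 c_chiX_1 P1(2)
          compat_id id_Em id_Ep id_Ea id_Eb)
  next
    case (P2 k)
    have kk: "1 \<le> k" "k \<le> n" "k \<notin> Ibad n X" using P2(2) by (auto simp: Fr_def)
    have ne: "k \<noteq> i" if "chi_i n i \<in> X \<or> chiI n i \<in> X" for i
      using kk(3) that by (auto simp: Ibad_def)
    show ?thesis using b unfolding big_def P2(1)
      apply (elim disjE exE conjE)
      using xX ne by (simp_all add: c_acm_2 c_chi_i_2 c_chiI_2 c_chi_2[OF kk(1,2)] c_chiX_2[OF kk(1,2)] kk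
          compat_id id_Em id_Ep id_Ea id_Eb)
  next
    case (P3 k)
    have kk: "1 \<le> k" "k \<le> n" "k \<notin> Ibad n X" using P3(2) by (auto simp: Fr_def)
    have ne: "k \<noteq> i" if "chi_i n i \<in> X \<or> chiI n i \<in> X" for i
      using kk(3) that by (auto simp: Ibad_def)
    show ?thesis using b unfolding big_def P3(1)
      apply (elim disjE exE conjE)
      using xX ne by (simp_all add: c_acm_3 c_chi_i_3 c_chiI_3 c_chi_3[OF kk(1,2)] c_chiX_3[OF kk(1,2)] kk
          compat_id id_Em id_Ep id_Ea id_Eb)
  qed
qed


lemma chi_i_at: "k \<le> n \<Longrightarrow> chi_i n k' (k - 1) = (if k - 1 = k' - 1 then Some k' else None)"
proof -
  assume "k \<le> n"
  then have "k - 1 \<noteq> n+1+k'" "k - 1 \<noteq> 2*n+1+k'" by arith+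
  then show ?thesis by (simp add: chi_i_def)
qed

lemma chiI_at: "1 \<le> k' \<Longrightarrow> k \<le> n \<Longrightarrow> chiI n k' (k - 1) = (if k - 1 = k' then Some (k' - 1) else None)"
proof -
  assume "1 \<le> k'" "k \<le> n"
  then have "k - 1 \<noteq> n+k'" "k - 1 \<noteq> 2*n+2+k'" by arith+
  then show ?thesis by (auto simp add: chiI_def)
qed

lemma chiI_at2: "1 \<le> k' \<Longrightarrow> 1 \<le> k \<Longrightarrow> k \<le> n \<Longrightarrow> chiI n k' k = (if k = k' then Some (k' - 1) else None)"
proof -
  assume "1 \<le> k'" "1 \<le> k" "k \<le> n"
  then have "k \<noteq> n+k'" "k \<noteq> 2*n+2+k'" by arith+
  then show ?thesis by (auto simp add: chiI_def)
qed

lemma chi_i_inj: "1 \<le> k \<Longrightarrow> k \<le> n \<Longrightarrow> chi_i n k = chi_i n k' \<Longrightarrow> 1 \<le> k' \<Longrightarrow> k = k'"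
proof -
  assume k: "1 \<le> k" "k \<le> n" and e: "chi_i n k = chi_i n k'" and k': "1 \<le> k'"
  have "chi_i n k (k - 1) = Some k" using chi_i_at[OF k(2), of k] by simp
  then have "chi_i n k' (k - 1) = Some k" using e by simp
  then have "k - 1 = k' - 1 \<and> k' = k" using chi_i_at[OF k(2), of k'] by (simp split: if_splits)
  then show "k = k'" by simp
qed

lemma chiI_inj: "1 \<le> k \<Longrightarrow> k \<le> n \<Longrightarrow> chiI n k = chiI n k' \<Longrightarrow> 1 \<le> k' \<Longrightarrow> k = k'"
proof -
  assume k: "1 \<le> k" "k \<le> n" and e: "chiI n k = chiI n k'" and k': "1 \<le> k'"
  have "chiI n k k = Some (k - 1)" using chiI_at2[OF k(1) k] by simp
  then have "chiI n k' k = Some (k - 1)" using e by simp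
  then show "k = k'" using chiI_at2[OF k' k] by (simp split: if_splits)
qed

lemma chi_chiI_ne: "1 \<le> k' \<Longrightarrow> 1 \<le> k \<Longrightarrow> k \<le> n \<Longrightarrow> chi_i n k \<noteq> chiI n k'"
proof
  assume k': "1 \<le> k'" and k: "1 \<le> k" "k \<le> n" and e: "chi_i n k = chiI n k'"
  have "chi_i n k (k - 1) = Some k" using chi_i_at[OF k(2), of k] by simp
  then have "chiI n k' (k - 1) = Some k" using e by simp
  then have "k - 1 = k' \<and> k' - 1 = k" using chiI_at[OF k' k(2)] by (simp split: if_splits)
  then show False using k by arith
qed

lemma count_free:
  assumes fin: "finite X" and Y: "Y \<subseteq> X" and lo: "1 \<le> lo" and hi: "hi \<le> n"
    and notY: "\<And>k. lo \<le> k \<Longrightarrow> k \<le> hi \<Longrightarrow> chi_i n k \<notin> Y \<and> chiI n k \<notin> Y"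
    and cd: "card X < (hi + 1 - lo) + card Y"
  shows "\<exists>k. lo \<le> k \<and> k \<le> hi \<and> k \<notin> Ibad n X"
proof (rule ccontr)
  assume "\<not> ?thesis"
  then have all: "\<And>k. lo \<le> k \<Longrightarrow> k \<le> hi \<Longrightarrow> chi_i n k \<in> X \<or> chiI n k \<in> X"
    by (auto simp: Ibad_def)
  define f where "f k = (if chi_i n k \<in> X then chi_i n k else chiI n k)" for k
  have sub: "f ` {lo..hi} \<subseteq> X - Y"
  proof
    fix y assume "y \<in> f ` {lo..hi}"
    then obtain k where k: "lo \<le> k" "k \<le> hi" "y = f k" by auto
    show "y \<in> X - Y" using all[OF k(1,2)] notY[OF k(1,2)] k(3) by (auto simp: f_def)
  qed
  have inj: "inj_on f {lo..hi}"
  proof (rule inj_onI)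
    fix k k' assume kk: "k \<in> {lo..hi}" "k' \<in> {lo..hi}" and e: "f k = f k'"
    have k1: "1 \<le> k" "k \<le> n" "1 \<le> k'" "k' \<le> n" using kk lo hi by auto
    show "k = k'"
    proof (cases "chi_i n k \<in> X"; cases "chi_i n k' \<in> X")
      assume "chi_i n k \<in> X" "chi_i n k' \<in> X"
      then show ?thesis using e chi_i_inj[OF k1(1,2) _ k1(3)] by (simp add: f_def)
    next
      assume "chi_i n k \<in> X" "chi_i n k' \<notin> X"
      then show ?thesis using e chi_chiI_ne[OF k1(3) k1(1,2)] by (simp add: f_def)
    next
      assume "chi_i n k \<notin> X" "chi_i n k' \<in> X"
      then show ?thesis using e chi_chiI_ne[OF k1(1) k1(3,4)] by (simp add: f_def)
    next
      assume "chi_i n k \<notin> X" "chi_i n k' \<notin> X"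
      then show ?thesis using e chiI_inj[OF k1(1,2) _ k1(3)] by (simp add: f_def)
    qed
  qed
  have "card {lo..hi} \<le> card (X - Y)"
    using card_inj_on_le[OF inj sub] fin by blast
  moreover have "card (X - Y) = card X - card Y" using card_Diff_subset[OF finite_subset[OF Y fin] Y] .
  moreover have "card Y \<le> card X" using card_mono[OF fin Y] .
  ultimately show False using cd by simp
qed

lemma free_by_point:
  assumes fin: "finite X" and cd: "card X \<le> hi + 1 - lo" and x: "x \<in> X" and xp: "x p0 \<noteq> None"
    and lo: "1 \<le> lo" and hi: "hi \<le> n"
    and pt: "\<And>k. lo \<le> k \<Longrightarrow> k \<le> hi \<Longrightarrow> chi_i n k p0 = None \<and> chiI n k p0 = None"
  shows "\<exists>k. lo \<le> k \<and> k \<le> hi \<and> k \<notin> Ibad n X"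
proof (rule count_free[OF fin _ lo hi, of "{x}"])
  show "{x} \<subseteq> X" using x by simp
  show "chi_i n k \<notin> {x} \<and> chiI n k \<notin> {x}" if "lo \<le> k" "k \<le> hi" for k
    using pt[OF that] xp by auto
  show "card X < hi + 1 - lo + card {x}" using cd by simp
qed

lemma pt_lo: "1 \<le> k \<Longrightarrow> k + 1 \<le> n \<Longrightarrow>
   chi_i n k (2*n+1) = None \<and> chiI n k (2*n+1) = None \<and> chi_i n k n = None \<and> chiI n k n = None"
  by (auto simp: chi_i_def chiI_def)
lemma pt_hi: "2 \<le> k \<Longrightarrow> k \<le> n \<Longrightarrow>
   chi_i n k 0 = None \<and> chiI n k 0 = None \<and> chi_i n k (n+1) = None \<and> chiI n k (n+1) = None"
  by (auto simp: chi_i_def chiI_def)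

lemma Flo_gen:
  assumes n: "2 \<le> n" and fin: "finite X" and cd: "card X < n" and x: "x \<in> X"
    and xp: "x n \<noteq> None \<or> x (2*n+1) \<noteq> None"
  shows "\<exists>k. Fr n X k \<and> k + 1 \<le> n"
proof -
  have cd': "card X \<le> (n - 1) + 1 - 1" using cd n by simp
  obtain p0 where p0: "x p0 \<noteq> None" "p0 = n \<or> p0 = 2*n+1" using xp by blast
  have "\<exists>k. 1 \<le> k \<and> k \<le> n - 1 \<and> k \<notin> Ibad n X"
    by (rule free_by_point[OF fin cd' x p0(1)]) (use pt_lo p0(2) n in auto)
  then obtain k where k: "1 \<le> k" "k \<le> n - 1" "k \<notin> Ibad n X" by blast
  then have "Fr n X k \<and> k + 1 \<le> n" using n by (auto simp: Fr_def)
  then show ?thesis by blast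
qed

lemma Fhi_gen:
  assumes n: "2 \<le> n" and fin: "finite X" and cd: "card X < n" and x: "x \<in> X"
    and xp: "x 0 \<noteq> None \<or> x (n+1) \<noteq> None"
  shows "\<exists>k. Fr n X k \<and> 2 \<le> k"
proof -
  have cd': "card X \<le> n + 1 - 2" using cd n by simp
  obtain p0 where p0: "x p0 \<noteq> None" "p0 = 0 \<or> p0 = n+1" using xp by blast
  have "\<exists>k. 2 \<le> k \<and> k \<le> n \<and> k \<notin> Ibad n X"
    by (rule free_by_point[OF fin cd' x p0(1)]) (use pt_hi p0(2) n in auto)
  then obtain k where k: "2 \<le> k" "k \<le> n" "k \<notin> Ibad n X" by blast
  then have "Fr n X k \<and> 2 \<le> k" by (auto simp: Fr_def)
  then show ?thesis by blast
qed

lemma Fall_gen: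
  assumes n: "2 \<le> n" and fin: "finite X" and cd: "card X < n"
  shows "\<exists>k. Fr n X k"
proof -
  have "\<exists>k. 1 \<le> k \<and> k \<le> n \<and> k \<notin> Ibad n X"
    by (rule count_free[OF fin _ _ _, of "{}" 1 n n]) (use cd in auto)
  then obtain k where k: "1 \<le> k" "k \<le> n" "k \<notin> Ibad n X" by blast
  then have "Fr n X k" by (auto simp: Fr_def)
  then show ?thesis by blast
qed


lemma sim_from_sets:
  assumes cp: "\<forall>\<kappa>\<in>K. compat \<kappa> x"
    and dD: "\<And>p r. x p = Some r \<Longrightarrow> p \<in> Dm"
    and dR: "\<And>p r. x p = Some r \<Longrightarrow> r \<in> Rn"
    and Dd: "\<And>p. p \<in> Dm \<Longrightarrow> x p \<noteq> None"
    and Rr: "\<And>r. r \<in> Rn \<Longrightarrow> \<exists>p. x p = Some r"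
    and sD: "\<And>q. q \<notin> Dm \<Longrightarrow> \<exists>\<kappa>\<in>K. \<forall>p\<in>Dm. \<kappa> p \<noteq> \<kappa> q"
    and sR: "\<And>q. q \<notin> Rn \<Longrightarrow> \<exists>\<kappa>\<in>K. \<forall>p\<in>Rn. \<kappa> p \<noteq> \<kappa> q"
  shows "sim K x (\<lambda>\<kappa>. tau \<kappa> x)"
proof (rule sim_base[OF cp])
  fix q assume "x q = None"
  then have "q \<notin> Dm" using Dd by blast
  then obtain \<kappa> where "\<kappa> \<in> K" "\<forall>p\<in>Dm. \<kappa> p \<noteq> \<kappa> q" using sD by blast
  then show "\<exists>\<kappa>\<in>K. \<forall>p r. x p = Some r \<longrightarrow> \<kappa> p \<noteq> \<kappa> q" using dD by blast
next
  fix q assume "\<forall>p. x p \<noteq> Some q"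
  then have "q \<notin> Rn" using Rr by blast
  then obtain \<kappa> where "\<kappa> \<in> K" "\<forall>p\<in>Rn. \<kappa> p \<noteq> \<kappa> q" using sR by blast
  then show "\<exists>\<kappa>\<in>K. \<forall>p r. x p = Some r \<longrightarrow> \<kappa> r \<noteq> \<kappa> q" using dR by blast
qed

lemma conv2: "\<exists>\<kappa>\<in>K. \<kappa> q \<noteq> \<kappa> a \<and> \<kappa> q \<noteq> \<kappa> b \<Longrightarrow> \<exists>\<kappa>\<in>K. \<forall>p\<in>{a, b}. \<kappa> p \<noteq> \<kappa> q"
  by (metis empty_iff insert_iff)
lemma conv3: "\<exists>\<kappa>\<in>K. \<kappa> q \<noteq> \<kappa> a \<and> \<kappa> q \<noteq> \<kappa> b \<and> \<kappa> q \<noteq> \<kappa> c \<Longrightarrow> \<exists>\<kappa>\<in>K. \<forall>p\<in>{a, b, c}. \<kappa> p \<noteq> \<kappa> q"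
  by (metis empty_iff insert_iff)

lemma g_Em: "Em n i p = Some q \<Longrightarrow> (p = i - 1 \<and> q = i - 1) \<or> (p = n+1+i \<and> q = n+1+i) \<or> (p = 2*n+1+i \<and> q = 2*n+1+i)"
  by (auto simp: Em_def split: if_splits)
lemma g_Ep: "Ep n i p = Some q \<Longrightarrow> (p = i \<and> q = i) \<or> (p = n+i \<and> q = n+i) \<or> (p = 2*n+2+i \<and> q = 2*n+2+i)"
  by (auto simp: Ep_def split: if_splits)
lemma g_Ea: "Ea n p = Some q \<Longrightarrow> (p = n \<and> q = n) \<or> (p = n+1 \<and> q = n+1)"
  by (auto simp: Ea_def split: if_splits)
lemma g_Eb: "Eb n p = Some q \<Longrightarrow> (p = 2*n+1 \<and> q = 2*n+1) \<or> (p = 2*n+2 \<and> q = 2*n+2)"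
  by (auto simp: Eb_def split: if_splits)

lemma sim_g2:
  assumes cp: "\<forall>\<kappa>\<in>K. compat \<kappa> x"
    and v: "x pa = Some qa" "x pb = Some qb"
    and g: "\<And>p r. x p = Some r \<Longrightarrow> (p = pa \<and> r = qa) \<or> (p = pb \<and> r = qb)"
    and sD: "\<And>q. q \<notin> {pa, pb} \<Longrightarrow> \<exists>\<kappa>\<in>K. \<forall>p\<in>{pa, pb}. \<kappa> p \<noteq> \<kappa> q"
    and sR: "\<And>q. q \<notin> {qa, qb} \<Longrightarrow> \<exists>\<kappa>\<in>K. \<forall>p\<in>{qa, qb}. \<kappa> p \<noteq> \<kappa> q"
  shows "sim K x (\<lambda>\<kappa>. tau \<kappa> x)"
  by (rule sim_from_sets[OF cp _ _ _ _ sD sR]) (use v g in auto)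

lemma sim_g3:
  assumes cp: "\<forall>\<kappa>\<in>K. compat \<kappa> x"
    and v: "x pa = Some qa" "x pb = Some qb" "x pc = Some qc"
    and g: "\<And>p r. x p = Some r \<Longrightarrow> (p = pa \<and> r = qa) \<or> (p = pb \<and> r = qb) \<or> (p = pc \<and> r = qc)"
    and sD: "\<And>q. q \<notin> {pa, pb, pc} \<Longrightarrow> \<exists>\<kappa>\<in>K. \<forall>p\<in>{pa, pb, pc}. \<kappa> p \<noteq> \<kappa> q"
    and sR: "\<And>q. q \<notin> {qa, qb, qc} \<Longrightarrow> \<exists>\<kappa>\<in>K. \<forall>p\<in>{qa, qb, qc}. \<kappa> p \<noteq> \<kappa> q"
  shows "sim K x (\<lambda>\<kappa>. tau \<kappa> x)"
  by (rule sim_from_sets[OF cp _ _ _ _ sD sR]) (use v g in auto)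

context
  fixes n :: nat and X :: "pmap set"
  assumes n: "2 \<le> n" and fin: "finite X" and cd: "card X < n"
begin

lemma F: "\<exists>k. Fr n X k" using Fall_gen[OF n fin cd] .

lemma sD_AC: "a \<le> n \<Longrightarrow> q \<notin> {a, 2*n+2+a} \<Longrightarrow> \<exists>\<kappa>\<in>KK n X. \<forall>p\<in>{a, 2*n+2+a}. \<kappa> p \<noteq> \<kappa> q"
  by (rule conv2) (rule refl_AC[OF n _ _ _ F], auto)

lemma sD_S4: "q \<notin> {n, n+1} \<Longrightarrow> \<exists>\<kappa>\<in>KK n X. \<forall>p\<in>{n, n+1}. \<kappa> p \<noteq> \<kappa> q"
  by (rule conv2) (rule refl_S4[OF n _ _ F], auto)

lemma sD_S5: "q \<notin> {2*n+1, 2*n+2} \<Longrightarrow> \<exists>\<kappa>\<in>KK n X. \<forall>p\<in>{2*n+1, 2*n+2}. \<kappa> p \<noteq> \<kappa> q"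
  by (rule conv2) (rule refl_S5[OF n _ _ F], auto)

lemma sD_S2:
  assumes i: "1 \<le> i" "i \<le> n" and x: "x \<in> X"
    and xlo: "i = n \<Longrightarrow> x n \<noteq> None \<or> x (2*n+1) \<noteq> None"
    and xhi: "i = 1 \<Longrightarrow> x 0 \<noteq> None \<or> x (n+1) \<noteq> None"
    and q: "q \<notin> {i - 1, n+1+i, 2*n+1+i}"
  shows "\<exists>\<kappa>\<in>KK n X. \<forall>p\<in>{i - 1, n+1+i, 2*n+1+i}. \<kappa> p \<noteq> \<kappa> q"
proof (rule conv3, rule refl_S2[OF n i])
  show "q \<noteq> i - 1" "q \<noteq> n+1+i" "q \<noteq> 2*n+1+i" using q by auto
  show "\<exists>k. Fr n X k" by (rule F)
  show "\<exists>k. Fr n X k \<and> k + 1 \<le> n" if "i = n" using Flo_gen[OF n fin cd x xlo[OF that]] .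
  show "\<exists>k. Fr n X k \<and> 2 \<le> k" if "i = 1" using Fhi_gen[OF n fin cd x xhi[OF that]] .
qed

lemma sD_S3:
  assumes i: "1 \<le> i" "i \<le> n" and x: "x \<in> X"
    and xlo: "i = n \<Longrightarrow> x n \<noteq> None \<or> x (2*n+1) \<noteq> None"
    and xhi: "i = 1 \<Longrightarrow> x 0 \<noteq> None \<or> x (n+1) \<noteq> None"
    and q: "q \<notin> {i, n+i, 2*n+2+i}"
  shows "\<exists>\<kappa>\<in>KK n X. \<forall>p\<in>{i, n+i, 2*n+2+i}. \<kappa> p \<noteq> \<kappa> q"
proof (rule conv3, rule refl_S3[OF n i])
  show "q \<noteq> i" "q \<noteq> n+i" "q \<noteq> 2*n+2+i" using q by auto
  show "\<exists>k. Fr n X k" by (rule F)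
  show "\<exists>k. Fr n X k \<and> k + 1 \<le> n" if "i = n" using Flo_gen[OF n fin cd x xlo[OF that]] .
  show "\<exists>k. Fr n X k \<and> 2 \<le> k" if "i = 1" using Fhi_gen[OF n fin cd x xhi[OF that]] .
qed


lemma base_R1:
  assumes x: "x \<in> X" and r: "R1 x" and cp: "\<forall>\<kappa>\<in>KK n X. compat \<kappa> x"
  shows "sim (KK n X) x (\<lambda>\<kappa>. tau \<kappa> x)"
proof (rule sim_base[OF cp])
  have K0: "Phi1 n (\<lambda>x. x = 0) \<in> KK n X" using n by (intro K1) auto
  fix q assume xq: "x q = None"
  show "\<exists>\<kappa>\<in>KK n X. \<forall>p r. x p = Some r \<longrightarrow> \<kappa> p \<noteq> \<kappa> q"
  proof (cases "\<exists>p0 r0. x p0 = Some r0")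
    case True
    then obtain p0 r0 where p0: "x p0 = Some r0" by blast
    have "p0 \<noteq> q" using p0 xq by auto
    then obtain \<kappa> where k: "\<kappa> \<in> KK n X" "\<kappa> p0 \<noteq> \<kappa> q" using sep_all[OF n _ F] by blast
    have "\<forall>p r. x p = Some r \<longrightarrow> p = p0" using r p0 unfolding R1_def by blast
    then show ?thesis using k by blast
  next
    case False
    then show ?thesis using K0 by blast
  qed
next
  have K0: "Phi1 n (\<lambda>x. x = 0) \<in> KK n X" using n by (intro K1) auto
  fix q assume xq: "\<forall>p. x p \<noteq> Some q"
  show "\<exists>\<kappa>\<in>KK n X. \<forall>p r. x p = Some r \<longrightarrow> \<kappa> r \<noteq> \<kappa> q"
  proof (cases "\<exists>p0 r0. x p0 = Some r0")
    case True
    then obtain p0 r0 where p0: "x p0 = Some r0" by blast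
    have "r0 \<noteq> q" using p0 xq by auto
    then obtain \<kappa> where k: "\<kappa> \<in> KK n X" "\<kappa> r0 \<noteq> \<kappa> q" using sep_all[OF n _ F] by blast
    have "\<forall>p r. x p = Some r \<longrightarrow> r = r0" using r p0 unfolding R1_def by (metis option.distinct(1) option.inject)
    then show ?thesis using k by blast
  next
    case False
    then show ?thesis using K0 by blast
  qed
qed

lemma base_sim:
  assumes x: "x \<in> X" and w: "inW n x"
  shows "sim (KK n X) x (\<lambda>\<kappa>. tau \<kappa> x)"
proof -
  have cp: "\<forall>\<kappa>\<in>KK n X. compat \<kappa> x" using compat_all[OF n x w] by blast
  show ?thesis
  proof (cases "R1 x")
    case True then show ?thesis using base_R1[OF x _ cp] by blast
  next
    case False
    then have b: "big n x" using w by (auto simp: inW_def)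
    then show ?thesis unfolding big_def
    proof (elim disjE exE conjE)
      fix a b assume ab: "a \<le> n" "b \<le> n" and xe: "x = acm n a b"
      show ?thesis unfolding xe
        proof (rule sim_g2[where pa = "a" and qa = "b" and pb = "2*n+2+a" and qb = "2*n+2+b"])
        show "\<forall>\<kappa>\<in>KK n X. compat \<kappa> (acm n a b)" using cp unfolding xe .
        show "\<And>p r. (acm n a b) p = Some r \<Longrightarrow> (p = a \<and> r = b) \<or> (p = 2*n+2+a \<and> r = 2*n+2+b)" by (rule g_acm)
        show "\<And>q. q \<notin> {a, 2*n+2+a} \<Longrightarrow> \<exists>\<kappa>\<in>KK n X. \<forall>p\<in>{a, 2*n+2+a}. \<kappa> p \<noteq> \<kappa> q" by (rule sD_AC[OF ab(1)])
        show "\<And>q. q \<notin> {b, 2*n+2+b} \<Longrightarrow> \<exists>\<kappa>\<in>KK n X. \<forall>p\<in>{b, 2*n+2+b}. \<kappa> p \<noteq> \<kappa> q" by (rule sD_AC[OF ab(2)])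
      qed (use ab in \<open>auto simp: acm_def\<close>)
    next
      fix i assume i: "1 \<le> i" "i \<le> n" and xe: "x = chi_i n i"
      have xX: "chi_i n i \<in> X" using x xe by simp
      show ?thesis unfolding xe
        proof (rule sim_g3[where pa = "i - 1" and qa = "i" and pb = "n+1+i" and qb = "n+i" and pc = "2*n+1+i" and qc = "2*n+2+i"])
        show "\<forall>\<kappa>\<in>KK n X. compat \<kappa> (chi_i n i)" using cp unfolding xe .
        show "\<And>p r. (chi_i n i) p = Some r \<Longrightarrow> (p = i - 1 \<and> r = i) \<or> (p = n+1+i \<and> r = n+i) \<or> (p = 2*n+1+i \<and> r = 2*n+2+i)" by (rule g_chi_i)
        show "\<And>q. q \<notin> {i - 1, n+1+i, 2*n+1+i} \<Longrightarrow> \<exists>\<kappa>\<in>KK n X. \<forall>p\<in>{i - 1, n+1+i, 2*n+1+i}. \<kappa> p \<noteq> \<kappa> q" by (rule sD_S2[OF i xX]) (use i n in \<open>auto simp: chi_i_def\<close>)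
        show "\<And>q. q \<notin> {i, n+i, 2*n+2+i} \<Longrightarrow> \<exists>\<kappa>\<in>KK n X. \<forall>p\<in>{i, n+i, 2*n+2+i}. \<kappa> p \<noteq> \<kappa> q" by (rule sD_S3[OF i xX]) (use i n in \<open>auto simp: chi_i_def\<close>)
      qed (use i n in \<open>auto simp: chi_i_def\<close>)
    next
      fix i assume i: "1 \<le> i" "i \<le> n" and xe: "x = chiI n i"
      have xX: "chiI n i \<in> X" using x xe by simp
      show ?thesis unfolding xe
        proof (rule sim_g3[where pa = "i" and qa = "i - 1" and pb = "n+i" and qb = "n+1+i" and pc = "2*n+2+i" and qc = "2*n+1+i"])
        show "\<forall>\<kappa>\<in>KK n X. compat \<kappa> (chiI n i)" using cp unfolding xe .
        show "\<And>p r. (chiI n i) p = Some r \<Longrightarrow> (p = i \<and> r = i - 1) \<or> (p = n+i \<and> r = n+1+i) \<or> (p = 2*n+2+i \<and> r = 2*n+1+i)" by (rule g_chiI)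
        show "\<And>q. q \<notin> {i, n+i, 2*n+2+i} \<Longrightarrow> \<exists>\<kappa>\<in>KK n X. \<forall>p\<in>{i, n+i, 2*n+2+i}. \<kappa> p \<noteq> \<kappa> q" by (rule sD_S3[OF i xX]) (use i n in \<open>auto simp: chiI_def\<close>)
        show "\<And>q. q \<notin> {i - 1, n+1+i, 2*n+1+i} \<Longrightarrow> \<exists>\<kappa>\<in>KK n X. \<forall>p\<in>{i - 1, n+1+i, 2*n+1+i}. \<kappa> p \<noteq> \<kappa> q" by (rule sD_S2[OF i xX]) (use i n in \<open>auto simp: chiI_def\<close>)
      qed (use i n in \<open>auto simp: chiI_def\<close>)
    next
      fix i assume i: "1 \<le> i" "i \<le> n" and xe: "x = Em n i"
      have xX: "Em n i \<in> X" using x xe by simp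
      show ?thesis unfolding xe
        proof (rule sim_g3[where pa = "i - 1" and qa = "i - 1" and pb = "n+1+i" and qb = "n+1+i" and pc = "2*n+1+i" and qc = "2*n+1+i"])
        show "\<forall>\<kappa>\<in>KK n X. compat \<kappa> (Em n i)" using cp unfolding xe .
        show "\<And>p r. (Em n i) p = Some r \<Longrightarrow> (p = i - 1 \<and> r = i - 1) \<or> (p = n+1+i \<and> r = n+1+i) \<or> (p = 2*n+1+i \<and> r = 2*n+1+i)" by (rule g_Em)
        show "\<And>q. q \<notin> {i - 1, n+1+i, 2*n+1+i} \<Longrightarrow> \<exists>\<kappa>\<in>KK n X. \<forall>p\<in>{i - 1, n+1+i, 2*n+1+i}. \<kappa> p \<noteq> \<kappa> q" by (rule sD_S2[OF i xX]) (use i n in \<open>auto simp: Em_def\<close>)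
        show "\<And>q. q \<notin> {i - 1, n+1+i, 2*n+1+i} \<Longrightarrow> \<exists>\<kappa>\<in>KK n X. \<forall>p\<in>{i - 1, n+1+i, 2*n+1+i}. \<kappa> p \<noteq> \<kappa> q" by (rule sD_S2[OF i xX]) (use i n in \<open>auto simp: Em_def\<close>)
      qed (use i n in \<open>auto simp: Em_def\<close>)
    next
      fix i assume i: "1 \<le> i" "i \<le> n" and xe: "x = Ep n i"
      have xX: "Ep n i \<in> X" using x xe by simp
      show ?thesis unfolding xe
        proof (rule sim_g3[where pa = "i" and qa = "i" and pb = "n+i" and qb = "n+i" and pc = "2*n+2+i" and qc = "2*n+2+i"])
        show "\<forall>\<kappa>\<in>KK n X. compat \<kappa> (Ep n i)" using cp unfolding xe .
        show "\<And>p r. (Ep n i) p = Some r \<Longrightarrow> (p = i \<and> r = i) \<or> (p = n+i \<and> r = n+i) \<or> (p = 2*n+2+i \<and> r = 2*n+2+i)" by (rule g_Ep)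
        show "\<And>q. q \<notin> {i, n+i, 2*n+2+i} \<Longrightarrow> \<exists>\<kappa>\<in>KK n X. \<forall>p\<in>{i, n+i, 2*n+2+i}. \<kappa> p \<noteq> \<kappa> q" by (rule sD_S3[OF i xX]) (use i n in \<open>auto simp: Ep_def\<close>)
        show "\<And>q. q \<notin> {i, n+i, 2*n+2+i} \<Longrightarrow> \<exists>\<kappa>\<in>KK n X. \<forall>p\<in>{i, n+i, 2*n+2+i}. \<kappa> p \<noteq> \<kappa> q" by (rule sD_S3[OF i xX]) (use i n in \<open>auto simp: Ep_def\<close>)
      qed (use i n in \<open>auto simp: Ep_def\<close>)
    next
      assume xe: "x = chi n"
      show ?thesis unfolding xe
        proof (rule sim_g2[where pa = "n" and qa = "2*n+1" and pb = "n+1" and qb = "2*n+2"])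
        show "\<forall>\<kappa>\<in>KK n X. compat \<kappa> (chi n)" using cp unfolding xe .
        show "\<And>p r. (chi n) p = Some r \<Longrightarrow> (p = n \<and> r = 2*n+1) \<or> (p = n+1 \<and> r = 2*n+2)" by (rule g_chi)
        show "\<And>q. q \<notin> {n, n+1} \<Longrightarrow> \<exists>\<kappa>\<in>KK n X. \<forall>p\<in>{n, n+1}. \<kappa> p \<noteq> \<kappa> q" by (rule sD_S4)
        show "\<And>q. q \<notin> {2*n+1, 2*n+2} \<Longrightarrow> \<exists>\<kappa>\<in>KK n X. \<forall>p\<in>{2*n+1, 2*n+2}. \<kappa> p \<noteq> \<kappa> q" by (rule sD_S5)
      qed (auto simp: chi_def)
    next
      assume xe: "x = chiX n"
      show ?thesis unfolding xe
        proof (rule sim_g2[where pa = "2*n+1" and qa = "n" and pb = "2*n+2" and qb = "n+1"])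
        show "\<forall>\<kappa>\<in>KK n X. compat \<kappa> (chiX n)" using cp unfolding xe .
        show "\<And>p r. (chiX n) p = Some r \<Longrightarrow> (p = 2*n+1 \<and> r = n) \<or> (p = 2*n+2 \<and> r = n+1)" by (rule g_chiX)
        show "\<And>q. q \<notin> {2*n+1, 2*n+2} \<Longrightarrow> \<exists>\<kappa>\<in>KK n X. \<forall>p\<in>{2*n+1, 2*n+2}. \<kappa> p \<noteq> \<kappa> q" by (rule sD_S5)
        show "\<And>q. q \<notin> {n, n+1} \<Longrightarrow> \<exists>\<kappa>\<in>KK n X. \<forall>p\<in>{n, n+1}. \<kappa> p \<noteq> \<kappa> q" by (rule sD_S4)
      qed (auto simp: chiX_def)
    next
      assume xe: "x = Ea n"
      show ?thesis unfolding xe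
        proof (rule sim_g2[where pa = "n" and qa = "n" and pb = "n+1" and qb = "n+1"])
        show "\<forall>\<kappa>\<in>KK n X. compat \<kappa> (Ea n)" using cp unfolding xe .
        show "\<And>p r. (Ea n) p = Some r \<Longrightarrow> (p = n \<and> r = n) \<or> (p = n+1 \<and> r = n+1)" by (rule g_Ea)
        show "\<And>q. q \<notin> {n, n+1} \<Longrightarrow> \<exists>\<kappa>\<in>KK n X. \<forall>p\<in>{n, n+1}. \<kappa> p \<noteq> \<kappa> q" by (rule sD_S4)
        show "\<And>q. q \<notin> {n, n+1} \<Longrightarrow> \<exists>\<kappa>\<in>KK n X. \<forall>p\<in>{n, n+1}. \<kappa> p \<noteq> \<kappa> q" by (rule sD_S4)
      qed (auto simp: Ea_def)
    next
      assume xe: "x = Eb n"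
      show ?thesis unfolding xe
        proof (rule sim_g2[where pa = "2*n+1" and qa = "2*n+1" and pb = "2*n+2" and qb = "2*n+2"])
        show "\<forall>\<kappa>\<in>KK n X. compat \<kappa> (Eb n)" using cp unfolding xe .
        show "\<And>p r. (Eb n) p = Some r \<Longrightarrow> (p = 2*n+1 \<and> r = 2*n+1) \<or> (p = 2*n+2 \<and> r = 2*n+2)" by (rule g_Eb)
        show "\<And>q. q \<notin> {2*n+1, 2*n+2} \<Longrightarrow> \<exists>\<kappa>\<in>KK n X. \<forall>p\<in>{2*n+1, 2*n+2}. \<kappa> p \<noteq> \<kappa> q" by (rule sD_S5)
        show "\<And>q. q \<notin> {2*n+1, 2*n+2} \<Longrightarrow> \<exists>\<kappa>\<in>KK n X. \<forall>p\<in>{2*n+1, 2*n+2}. \<kappa> p \<noteq> \<kappa> q" by (rule sD_S5)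
      qed (auto simp: Eb_def)
    qed
  qed
qed

end

theorem proposition5p1:
  fixes n :: nat and X :: "pmap set"
  assumes "n \<ge> 2" and "X \<subseteq> S n" and "finite X" and "card X < n"
  shows "in_var_B21 (inv_closure X) pmul pinv"
proof (rule variety_from_sim[where K = "KK n X"])
  fix x assume x: "x \<in> X"
  have w: "inW n x" using S_inW[OF assms(1)] assms(2) x by blast
  show "inj_map x \<and> (\<exists>\<beta>. sim (KK n X) x \<beta>)"
    using inj_inW[OF w] base_sim[OF assms(1,3,4) x w] by blast
next
  fix p q :: nat assume "p \<noteq> q"
  then show "\<exists>\<kappa>\<in>KK n X. \<kappa> p \<noteq> \<kappa> q" using sep_all[OF assms(1) _ F[OF assms(1,3,4)]] by blast
qed

end
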